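(* Let $\widehat G$ be a signed ribbon graph and let $L=L_{\widehat G}\subset G\times I$ be the corresponding signed medial link, with diagram $\widetilde L=\widetilde L_{\widehat G}$, endowed with an orientation. Then $$J_L(t)=(-1)^{w(\widetilde L)}\,t^{\frac{3w(\widetilde L)-r(\widehat G)+n(\widehat G)}{4}}\,\bigl(-t^{1/2}-t^{-1/2}\bigr)^{k(\widehat G)-1}\,R_{\widehat G}\Bigl(-t-1,\,-t^{-1}-1,\,\frac{1}{-t^{1/2}-t^{-1/2}}\Bigr).$$ In particular, if $\widehat G$ is a planar ribbon graph (its surface has genus zero) with only positive edges and with underlying abstract graph $\Gamma$, then $$J_L(t)=(-1)^{w(\widetilde L)}\,t^{\frac{3w(\widetilde L)-r(\widehat G)+n(\widehat G)}{4}}\,\bigl(-t^{1/2}-t^{-1/2}\bigr)^{k(\widehat G)-1}\,T_\Gamma(-t,-t^{-1}),$$ where $T_\Gamma$ is the classical Tutte polynomial of $\Gamma$.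
   Context: A ribbon graph $G$ is a graph $\Gamma=(V,E)$ (loops and multiple edges allowed) with a fixed cyclic order of edge-ends at each vertex; equivalently a compact surface with boundary that is a union of closed vertex discs and edge ribbons meeting in disjoint line segments, each segment on the boundary of exactly one vertex disc and one edge ribbon, each ribbon containing exactly two segments. The surface $G$ is oriented (counterclockwise rotation). For a ribbon graph $F$: $v(F),e(F),k(F)$ are the numbers of vertices, edges, connected components; $r(F)=v(F)-k(F)$, $n(F)=e(F)-r(F)$; $\mathrm{bc}(F)$ is the number of boundary components of the surface $F$. A spanning subgraph contains all vertices and a subset of edges; $\mathcal F(G)$ is the set of them; $\overline F=G-F$ is the complementary spanning subgraph. A signed ribbon graph $\widehat G$ is $G$ with a sign function $\varepsilon:E\to\{\pm1\}$; $r(\widehat G),n(\widehat G),k(\widehat G)$ mean those of $G$; $e_-(F)$ is the number of edges of $F$ with sign $-1$, and $s(F)=\tfrac12\bigl(e_-(F)-e_-(\overline F)\bigr)$. The signed Bollobás–Riordan polynomial is $$R_{\widehat G}(x,y,z)=\sum_{F\in\mathcal F(G)}x^{r(G)-r(F)+s(F)}\,y^{n(F)-s(F)}\,z^{k(F)-\mathrm{bc}(F)+n(F)}.$$ Diagrams and Kauffman bracket: for a link in $G\times I$ ($I=[0,1]$) in general position w.r.t. projection to $G$, a diagram is its projected immersed curve with over/under information at finitely many double points. At a crossing the $A$-splitting joins the two local regions swept by the overcrossing arc rotated according to the orientation of $G$ until it reaches the undercrossing arc; the $B$-splitting joins the other two. A state $S$ chooses a splitting at each crossing; $\alpha(S),\beta(S)$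 count $A$- and $B$-splittings, $\delta(S)$ counts components of the resulting curve. $\langle\widetilde L\rangle(A,B,d)=\sum_S A^{\alpha(S)}B^{\beta(S)}d^{\delta(S)-1}$. Medial links: the medial graph $H_G$ in $G$ has one 4-valent vertex at the middle of each edge ribbon, its edges running along the ribbons and turning at vertex discs to the next ribbon in the cyclic order. Regions of $G\setminus H_G$ containing a vertex of $\Gamma$ are black, others white. The natural diagram $\widetilde L_G$ makes each vertex of $H_G$ a crossing so that the overcrossing branch, rotated according to the orientation of $G$ until the undercrossing branch, sweeps out the black regions. The signed medial link diagram $\widetilde L_{\widehat G}$ is obtained from $\widetilde L_G$ by switching overcrossing and undercrossing at crossings of negative edges. Jones polynomial: for an oriented link $L$ with diagram $\widetilde L$, the writhe $w(\widetilde L)$ is the sum over crossings of the standard crossing signs ($\pm1$) determined by the orientation, and $J_L(t):=(-1)^{w(\widetilde L)}t^{3w(\widetilde L)/4}\langle\widetilde L\rangle\bigl(t^{-1/4},t^{1/4},-t^{1/2}-t^{-1/2}\bigr)$. *)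

theory Defs
  imports "HOL-Analysis.Analysis"
begin

section \<open>Ribbon graphs as combinatorial maps\<close>

text \<open>A ribbon graph is given by a finite vertex set V, a finite set D of darts
(edge-ends), the incidence map vert from darts to vertices, the rotation sigma
(the counterclockwise cyclic order of darts at each vertex, one cycle per vertex)
and the fixed-point-free involution alpha pairing the two ends of each edge.\<close>

definition ribbon_graph ::
  "'v set \<Rightarrow> 'd set \<Rightarrow> ('d \<Rightarrow> 'v) \<Rightarrow> ('d \<Rightarrow> 'd) \<Rightarrow> ('d \<Rightarrow> 'd) \<Rightarrow> bool" where
  "ribbon_graph V D vert \<sigma> \<alpha> \<longleftrightarrow>
     finite V \<and> finite D \<and> vert ` D \<subseteq> V \<and>
     bij_betw \<alpha> D D \<and> (\<forall>h\<in>D. \<alpha> h \<noteq> h \<and> \<alpha> (\<alpha> h) = h) \<and>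
     bij_betw \<sigma> D D \<and> (\<forall>h\<in>D. vert (\<sigma> h) = vert h) \<and>
     (\<forall>h\<in>D. \<forall>h'\<in>D. vert h = vert h' \<longrightarrow> (\<exists>n. (\<sigma> ^^ n) h = h'))"

definition rg_edges :: "'d set \<Rightarrow> ('d \<Rightarrow> 'd) \<Rightarrow> 'd set set" where
  "rg_edges D \<alpha> = (\<lambda>h. {h, \<alpha> h}) ` D"

definition gr_components :: "'v set \<Rightarrow> ('e \<Rightarrow> 'v set) \<Rightarrow> 'e set \<Rightarrow> nat" where
  "gr_components V ends F =
     card (V // ({(u, w). \<exists>e\<in>F. u \<in> ends e \<and> w \<in> ends e})\<^sup>*)"

definition gr_rank :: "'v set \<Rightarrow> ('e \<Rightarrow> 'v set) \<Rightarrow> 'e set \<Rightarrow> nat" where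
  "gr_rank V ends F = card V - gr_components V ends F"

definition gr_nullity :: "'v set \<Rightarrow> ('e \<Rightarrow> 'v set) \<Rightarrow> 'e set \<Rightarrow> nat" where
  "gr_nullity V ends F = card F - gr_rank V ends F"

definition tutte :: "'v set \<Rightarrow> 'e set \<Rightarrow> ('e \<Rightarrow> 'v set) \<Rightarrow> real \<Rightarrow> real \<Rightarrow> real" where
  "tutte V E ends x y =
     (\<Sum>F\<in>Pow E. (x - 1) ^ (gr_rank V ends E - gr_rank V ends F) * (y - 1) ^ (gr_nullity V ends F))"

text \<open>Spanning subgraphs are subsets F of rg_edges D alpha; the underlying
abstract graph has ends e = vert ` e.\<close>

definition rg_k :: "'v set \<Rightarrow> ('d \<Rightarrow> 'v) \<Rightarrow> 'd set set \<Rightarrow> nat" where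
  "rg_k V vert F = gr_components V (\<lambda>e. vert ` e) F"

definition rg_r :: "'v set \<Rightarrow> ('d \<Rightarrow> 'v) \<Rightarrow> 'd set set \<Rightarrow> nat" where
  "rg_r V vert F = gr_rank V (\<lambda>e. vert ` e) F"

definition rg_n :: "'v set \<Rightarrow> ('d \<Rightarrow> 'v) \<Rightarrow> 'd set set \<Rightarrow> nat" where
  "rg_n V vert F = gr_nullity V (\<lambda>e. vert ` e) F"

definition induced_rot :: "('d \<Rightarrow> 'd) \<Rightarrow> 'd set \<Rightarrow> 'd \<Rightarrow> 'd" where
  "induced_rot \<sigma> S h = (\<sigma> ^^ (LEAST n. n > 0 \<and> (\<sigma> ^^ n) h \<in> S)) h"

text \<open>Boundary components of the ribbon subgraph F: the orbits of the face
permutation (induced rotation composed with alpha) on the darts of F, plus one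
boundary circle for each vertex not incident to any edge of F.\<close>

definition rg_bc ::
  "'v set \<Rightarrow> ('d \<Rightarrow> 'v) \<Rightarrow> ('d \<Rightarrow> 'd) \<Rightarrow> ('d \<Rightarrow> 'd) \<Rightarrow> 'd set set \<Rightarrow> nat" where
  "rg_bc V vert \<sigma> \<alpha> F =
     (let S = \<Union>F in
       card (S // {(h, h'). h \<in> S \<and> h' \<in> S \<and> (\<exists>n. ((induced_rot \<sigma> S \<circ> \<alpha>) ^^ n) h = h')})
       + card {v\<in>V. \<forall>h\<in>S. vert h \<noteq> v})"

text \<open>Genus of the surface G (sum over components): 2g = k - bc + n.\<close>

definition rg_genus ::
  "'v set \<Rightarrow> 'd set \<Rightarrow> ('d \<Rightarrow> 'v) \<Rightarrow> ('d \<Rightarrow> 'd) \<Rightarrow> ('d \<Rightarrow> 'd) \<Rightarrow> int" where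
  "rg_genus V D vert \<sigma> \<alpha> =
     (let E = rg_edges D \<alpha> in
       (int (rg_k V vert E) - int (rg_bc V vert \<sigma> \<alpha> E) + int (rg_n V vert E)) div 2)"

text \<open>pos e = True iff edge e has sign +1.\<close>

definition neg_count :: "('d set \<Rightarrow> bool) \<Rightarrow> 'd set set \<Rightarrow> nat" where
  "neg_count pos F = card {e\<in>F. \<not> pos e}"

text \<open>Evaluation of the signed Bollobas--Riordan polynomial at complex x, y, z;
half-integer powers are principal complex powers.\<close>

definition signed_BR ::
  "'v set \<Rightarrow> 'd set \<Rightarrow> ('d \<Rightarrow> 'v) \<Rightarrow> ('d \<Rightarrow> 'd) \<Rightarrow> ('d \<Rightarrow> 'd) \<Rightarrow> ('d set \<Rightarrow> bool)
     \<Rightarrow> complex \<Rightarrow> complex \<Rightarrow> complex \<Rightarrow> complex" where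
  "signed_BR V D vert \<sigma> \<alpha> pos x y z =
     (let E = rg_edges D \<alpha> in
       \<Sum>F\<in>Pow E.
         (let s = (real (neg_count pos F) - real (neg_count pos (E - F))) / 2 in
           x powr complex_of_real (real (rg_r V vert E) - real (rg_r V vert F) + s)
           * y powr complex_of_real (real (rg_n V vert F) - s)
           * z ^ nat (int (rg_k V vert F) - int (rg_bc V vert \<sigma> \<alpha> F) + int (rg_n V vert F))))"

section \<open>Link diagrams on a surface (combinatorial), Kauffman bracket, writhe, Jones\<close>

text \<open>A diagram: a finite set C of crossings; port c 0, port c 1, port c 2, port c 3
are the four ends of the curve at crossing c in counterclockwise order, the
overcrossing strand being port c 0 -- port c 2 and the undercrossing strand
port c 1 -- port c 3; nxt p is the port at the other end of the arc of the
curve leaving the crossing through p; loops counts crossing-free closed curves.\<close>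

definition diag_ports :: "'c set \<Rightarrow> ('c \<Rightarrow> nat \<Rightarrow> 'p) \<Rightarrow> 'p set" where
  "diag_ports C port = (\<Union>c\<in>C. port c ` {0..3})"

text \<open>Splitting pairs for a state S (the set of crossings with A-splitting).
A-splitting joins the regions swept by the overstrand rotated counterclockwise,
i.e. the regions between ports 0,1 and between ports 2,3; the new arcs then
connect ports 1--2 and 3--0. B-splitting connects 0--1 and 2--3.\<close>

definition smooth_pairs :: "'c set \<Rightarrow> ('c \<Rightarrow> nat \<Rightarrow> 'p) \<Rightarrow> 'c set \<Rightarrow> ('p \<times> 'p) set" where
  "smooth_pairs C port S =
     (\<Union>c\<in>C. if c \<in> S then {(port c 1, port c 2), (port c 3, port c 0)}
             else {(port c 0, port c 1), (port c 2, port c 3)})"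

definition state_components ::
  "'c set \<Rightarrow> ('c \<Rightarrow> nat \<Rightarrow> 'p) \<Rightarrow> ('p \<Rightarrow> 'p) \<Rightarrow> nat \<Rightarrow> 'c set \<Rightarrow> nat" where
  "state_components C port nxt loops S =
     (let P = diag_ports C port;
          R = {(p, nxt p) | p. p \<in> P} \<union> smooth_pairs C port S
      in card (P // (R \<union> R\<inverse>)\<^sup>*) + loops)"

definition kauffman_bracket ::
  "'c set \<Rightarrow> ('c \<Rightarrow> nat \<Rightarrow> 'p) \<Rightarrow> ('p \<Rightarrow> 'p) \<Rightarrow> nat \<Rightarrow> real \<Rightarrow> real \<Rightarrow> real \<Rightarrow> real" where
  "kauffman_bracket C port nxt loops A B d =
     (\<Sum>S\<in>Pow C. A ^ card S * B ^ card (C - S)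
                 * d powi (int (state_components C port nxt loops S) - 1))"

text \<open>An orientation: ori p = True iff the oriented curve enters the crossing through port p.\<close>

definition diag_orientation ::
  "'c set \<Rightarrow> ('c \<Rightarrow> nat \<Rightarrow> 'p) \<Rightarrow> ('p \<Rightarrow> 'p) \<Rightarrow> ('p \<Rightarrow> bool) \<Rightarrow> bool" where
  "diag_orientation C port nxt ori \<longleftrightarrow>
     (\<forall>c\<in>C. ori (port c 0) \<noteq> ori (port c 2) \<and> ori (port c 1) \<noteq> ori (port c 3)) \<and>
     (\<forall>p\<in>diag_ports C port. ori (nxt p) \<noteq> ori p)"

text \<open>Crossing sign: +1 iff the under direction is the over direction rotated
counterclockwise by a right angle.\<close>

definition writhe :: "'c set \<Rightarrow> ('c \<Rightarrow> nat \<Rightarrow> 'p) \<Rightarrow> ('p \<Rightarrow> bool) \<Rightarrow> int" where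
  "writhe C port ori = (\<Sum>c\<in>C. if ori (port c 0) = ori (port c 1) then 1 else -1)"

definition jones ::
  "'c set \<Rightarrow> ('c \<Rightarrow> nat \<Rightarrow> 'p) \<Rightarrow> ('p \<Rightarrow> 'p) \<Rightarrow> nat \<Rightarrow> ('p \<Rightarrow> bool) \<Rightarrow> real \<Rightarrow> real" where
  "jones C port nxt loops ori t =
     (let w = writhe C port ori in
       (-1) powi w * t powr (3 * real_of_int w / 4)
       * kauffman_bracket C port nxt loops (t powr (-1/4)) (t powr (1/4))
           (- (t powr (1/2)) - t powr (-1/2)))"

section \<open>The signed medial link diagram of a signed ribbon graph\<close>

text \<open>Ports are pairs (h, b): (h, True) is the end of the
medial curve leaving the crossing of edge {h, alpha h} towards the corner between
h and sigma h; (h, False) towards the corner between sigma^-1 h and h.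
Drawing the edge with the dart h on the left, counterclockwise order of the
ports is (alpha h, False), (h, True), (h, False), (alpha h, True); the black
(vertex) regions lie between (h,True),(h,False) and between (alpha h,True),(alpha h,False).
For positive edges the overstrand is (h,True)--(alpha h,True) (rotating it
counterclockwise sweeps the black regions); for negative edges it is switched.\<close>

definition med_dart :: "'d set \<Rightarrow> 'd" where
  "med_dart e = (SOME h. h \<in> e)"

definition med_port :: "('d \<Rightarrow> 'd) \<Rightarrow> ('d set \<Rightarrow> bool) \<Rightarrow> 'd set \<Rightarrow> nat \<Rightarrow> 'd \<times> bool" where
  "med_port \<alpha> pos e i =
     (let h = med_dart e; h' = \<alpha> h in
       if pos e then [(h, True), (h, False), (h', True), (h', False)] ! i
       else [(h', False), (h, True), (h, False), (h', True)] ! i)"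

definition med_arc :: "'d set \<Rightarrow> ('d \<Rightarrow> 'd) \<Rightarrow> 'd \<times> bool \<Rightarrow> 'd \<times> bool" where
  "med_arc D \<sigma> p =
     (if snd p then (\<sigma> (fst p), False) else (the_inv_into D \<sigma> (fst p), True))"

text \<open>Each isolated vertex contributes a crossing-free circle (boundary of its disc).\<close>

definition med_loops :: "'v set \<Rightarrow> 'd set \<Rightarrow> ('d \<Rightarrow> 'v) \<Rightarrow> nat" where
  "med_loops V D vert = card {v\<in>V. \<forall>h\<in>D. vert h \<noteq> v}"

definition medial_orientation ::
  "'d set \<Rightarrow> ('d \<Rightarrow> 'd) \<Rightarrow> ('d \<Rightarrow> 'd) \<Rightarrow> ('d set \<Rightarrow> bool) \<Rightarrow> ('d \<times> bool \<Rightarrow> bool) \<Rightarrow> bool" where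
  "medial_orientation D \<sigma> \<alpha> pos ori =
     diag_orientation (rg_edges D \<alpha>) (med_port \<alpha> pos) (med_arc D \<sigma>) ori"

definition medial_writhe ::
  "'d set \<Rightarrow> ('d \<Rightarrow> 'd) \<Rightarrow> ('d set \<Rightarrow> bool) \<Rightarrow> ('d \<times> bool \<Rightarrow> bool) \<Rightarrow> int" where
  "medial_writhe D \<alpha> pos ori = writhe (rg_edges D \<alpha>) (med_port \<alpha> pos) ori"

definition medial_jones ::
  "'v set \<Rightarrow> 'd set \<Rightarrow> ('d \<Rightarrow> 'v) \<Rightarrow> ('d \<Rightarrow> 'd) \<Rightarrow> ('d \<Rightarrow> 'd) \<Rightarrow> ('d set \<Rightarrow> bool)
     \<Rightarrow> ('d \<times> bool \<Rightarrow> bool) \<Rightarrow> real \<Rightarrow> real" where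
  "medial_jones V D vert \<sigma> \<alpha> pos ori t =
     jones (rg_edges D \<alpha>) (med_port \<alpha> pos) (med_arc D \<sigma>) (med_loops V D vert) ori t"

end

theory Submission
  imports Defs
begin

definition orb :: "('a \<Rightarrow> 'a) \<Rightarrow> 'a \<Rightarrow> 'a set" where
  "orb f x = range (\<lambda>n. (f ^^ n) x)"

definition permA :: "'a set \<Rightarrow> ('a \<Rightarrow> 'a) \<Rightarrow> bool" where
  "permA A f \<longleftrightarrow> finite A \<and> f ` A \<subseteq> A \<and> inj_on f A"

lemma funpow_in: "f ` A \<subseteq> A \<Longrightarrow> x \<in> A \<Longrightarrow> (f ^^ n) x \<in> A"
  by (induction n) auto

lemma orb_subset: "f ` A \<subseteq> A \<Longrightarrow> x \<in> A \<Longrightarrow> orb f x \<subseteq> A"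
  unfolding orb_def using funpow_in[of f A x] by auto

lemma funpow_in_orb: "(f ^^ n) x \<in> orb f x"
  unfolding orb_def by blast

lemma self_in_orb: "x \<in> orb f x"
  using funpow_in_orb[where n=0 and f=f and x=x] by simp

lemma orbE: "y \<in> orb f x \<Longrightarrow> (\<And>n. y = (f ^^ n) x \<Longrightarrow> P) \<Longrightarrow> P"
  unfolding orb_def by blast

lemma funpow_split: "(f ^^ (a + b)) x = (f ^^ a) ((f ^^ b) x)"
  by (simp add: funpow_add)

lemma orb_trans: "y \<in> orb f x \<Longrightarrow> orb f y \<subseteq> orb f x"
proof
  fix z assume "y \<in> orb f x" "z \<in> orb f y"
  then obtain m n where "y = (f ^^ m) x" "z = (f ^^ n) y" by (auto elim!: orbE)
  then have "z = (f ^^ (n + m)) x" by (simp add: funpow_add)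
  then show "z \<in> orb f x" by (simp add: funpow_in_orb)
qed

lemma funpow_inj: "f ` A \<subseteq> A \<Longrightarrow> inj_on f A \<Longrightarrow> inj_on (f ^^ n) A"
proof (induction n)
  case 0 then show ?case by simp
next
  case (Suc n)
  have sub: "(f ^^ n) ` A \<subseteq> A" using funpow_in[OF Suc.prems(1), of _ n] by auto
  have "inj_on (f \<circ> (f ^^ n)) A"
    by (rule comp_inj_on) (use Suc sub in \<open>auto intro: inj_on_subset\<close>)
  then show ?case by (simp add: funpow_Suc_right[symmetric] funpow_swap1 comp_def)
qed

lemma funpow_mult_fix: "(f ^^ p) x = x \<Longrightarrow> (f ^^ (p * k)) x = x"
proof (induction k)
  case 0 then show ?case by simp
next
  case (Suc k)
  have "(f ^^ (p * Suc k)) x = (f ^^ (p * k + p)) x" by (simp add: add.commute)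
  also have "\<dots> = (f ^^ (p * k)) ((f ^^ p) x)" by (simp only: funpow_add comp_apply)
  finally have "(f ^^ (p * Suc k)) x = (f ^^ (p * k)) ((f ^^ p) x)" .
  then show ?case using Suc by simp
qed

lemma periodic:
  assumes "permA A f" "x \<in> A"
  shows "\<exists>p>0. (f ^^ p) x = x"
proof -
  have fin: "finite A" and im: "f ` A \<subseteq> A" and inj: "inj_on f A"
    using assms(1) unfolding permA_def by auto
  have "\<not> inj_on (\<lambda>n. (f ^^ n) x) {..card A}"
  proof
    assume "inj_on (\<lambda>n. (f ^^ n) x) {..card A}"
    moreover have "(\<lambda>n. (f ^^ n) x) ` {..card A} \<subseteq> A" using funpow_in[OF im assms(2)] by auto
    ultimately have "card {..card A} \<le> card A" using card_inj_on_le fin by blast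
    then show False by simp
  qed
  then obtain i j where ij: "i \<le> card A" "j \<le> card A" "i \<noteq> j" "(f ^^ i) x = (f ^^ j) x"
    unfolding inj_on_def by auto
  have H: "\<exists>p>0. (f ^^ p) x = x" if ij: "i < j" "(f ^^ i) x = (f ^^ j) x" for i j
  proof -
    have "(f ^^ j) x = (f ^^ (i + (j - i))) x" using ij by simp
    also have "\<dots> = (f ^^ i) ((f ^^ (j - i)) x)" by (rule funpow_split)
    finally have "(f ^^ i) x = (f ^^ i) ((f ^^ (j - i)) x)" using ij by simp
    moreover have "(f ^^ (j - i)) x \<in> A" using funpow_in[OF im assms(2)] .
    ultimately have "x = (f ^^ (j - i)) x"
      using inj_onD[OF funpow_inj[OF im inj, of i]] assms(2) by blast
    then show "\<exists>p>0. (f ^^ p) x = x" using \<open>i < j\<close> by (intro exI[of _ "j - i"]) auto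
  qed
  show ?thesis using H[of i j] H[of j i] ij by (cases "i < j") auto
qed

lemma orb_sym:
  assumes "permA A f" "x \<in> A" "y \<in> orb f x"
  shows "x \<in> orb f y"
proof -
  obtain p where p: "p > 0" "(f ^^ p) x = x" using periodic[OF assms(1,2)] by blast
  obtain m where m: "y = (f ^^ m) x" using assms(3) by (auto elim: orbE)
  have "(f ^^ (p * m)) x = x" using funpow_mult_fix[OF p(2)] .
  moreover have "p * m = (p * m - m) + m" using p(1) by (simp add: nat_mult_le_cancel_disj)
  ultimately have "x = (f ^^ ((p * m - m) + m)) x" by simp
  then have "x = (f ^^ (p * m - m)) y" unfolding funpow_split m .
  then show ?thesis by (simp add: funpow_in_orb)
qed

lemma orb_eq:
  assumes "permA A f" "x \<in> A" "y \<in> orb f x"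
  shows "orb f y = orb f x"
  using orb_trans[OF assms(3)] orb_trans[OF orb_sym[OF assms]] by blast

lemma orbN:
  assumes "(f ^^ N) x = x" "0 < N" "y \<in> orb f x"
  shows "\<exists>i. 1 \<le> i \<and> i \<le> N \<and> y = (f ^^ i) x"
proof -
  obtain n where n: "y = (f ^^ n) x" using assms(3) by (auto elim: orbE)
  have "(f ^^ n) x = (f ^^ (n mod N + N * (n div N))) x" by simp
  also have "\<dots> = (f ^^ (n mod N)) ((f ^^ (N * (n div N))) x)" by (rule funpow_split)
  also have "\<dots> = (f ^^ (n mod N)) x" using funpow_mult_fix[OF assms(1)] by simp
  finally have e: "y = (f ^^ (n mod N)) x" using n by simp
  show ?thesis
  proof (cases "n mod N = 0")
    case True then show ?thesis using e assms by (intro exI[of _ N]) auto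
  next
    case False then show ?thesis using e assms
      by (intro exI[of _ "n mod N"]) (auto simp: Suc_leI)
  qed
qed

definition per :: "('a \<Rightarrow> 'a) \<Rightarrow> 'a \<Rightarrow> nat" where
  "per f x = (LEAST p. 0 < p \<and> (f ^^ p) x = x)"

lemma per:
  assumes "permA A f" "x \<in> A"
  shows "0 < per f x" "(f ^^ per f x) x = x"
    "\<And>i. 0 < i \<Longrightarrow> i < per f x \<Longrightarrow> (f ^^ i) x \<noteq> x"
proof -
  have ex: "\<exists>p. 0 < p \<and> (f ^^ p) x = x" using periodic[OF assms] by blast
  show "0 < per f x" "(f ^^ per f x) x = x" using LeastI_ex[OF ex] unfolding per_def by auto
  show "\<And>i. 0 < i \<Longrightarrow> i < per f x \<Longrightarrow> (f ^^ i) x \<noteq> x"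
    using not_less_Least unfolding per_def by blast
qed

lemma per_distinct:
  assumes "permA A f" "x \<in> A" "i < per f x" "j < per f x" "(f ^^ i) x = (f ^^ j) x"
  shows "i = j"
proof (rule ccontr)
  have im: "f ` A \<subseteq> A" and inj: "inj_on f A" using assms(1) unfolding permA_def by auto
  have H: False if ij: "i < j" "j < per f x" "(f ^^ i) x = (f ^^ j) x" for i j
  proof -
    have "(f ^^ j) x = (f ^^ (i + (j - i))) x" using ij by simp
    also have "\<dots> = (f ^^ i) ((f ^^ (j - i)) x)" by (rule funpow_split)
    finally have "(f ^^ i) x = (f ^^ i) ((f ^^ (j - i)) x)" using ij by simp
    moreover have "(f ^^ (j - i)) x \<in> A" using funpow_in[OF im assms(2)] .
    ultimately have "x = (f ^^ (j - i)) x"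
      using inj_onD[OF funpow_inj[OF im inj, of i]] assms(2) by blast
    moreover have "(f ^^ (j - i)) x \<noteq> x" by (rule per(3)[OF assms(1,2)]) (use ij in auto)
    ultimately show False by simp
  qed
  assume "i \<noteq> j"
  then show False using H[of i j] H[of j i] assms(3-5) by (cases "i < j") auto
qed

lemma merge_card:
  assumes fin: "finite A" and cl: "\<And>x. x \<in> A \<Longrightarrow> x \<in> cls x"
    and eq: "\<And>x y. x \<in> A \<Longrightarrow> y \<in> A \<Longrightarrow> y \<in> cls x \<Longrightarrow> cls y = cls x"
    and a: "a \<in> A" "b \<in> A" "cls a \<noteq> cls b"
    and out: "\<And>x. x \<in> A \<Longrightarrow> x \<notin> cls a \<union> cls b \<Longrightarrow> cls' x = cls x"
    and inn: "\<And>x. x \<in> A \<Longrightarrow> x \<in> cls a \<union> cls b \<Longrightarrow> cls' x = cls a \<union> cls b"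
  shows "card (cls' ` A) + 1 = card (cls ` A)"
proof -
  define B where "B = A - (cls a \<union> cls b)"
  have e1: "cls ` A = insert (cls a) (insert (cls b) (cls ` B))"
  proof
    show "cls ` A \<subseteq> insert (cls a) (insert (cls b) (cls ` B))"
    proof
      fix y assume "y \<in> cls ` A"
      then obtain x where x: "x \<in> A" "y = cls x" by auto
      show "y \<in> insert (cls a) (insert (cls b) (cls ` B))"
      proof (cases "x \<in> cls a \<union> cls b")
        case True then show ?thesis using eq[OF a(1) x(1)] eq[OF a(2) x(1)] x by auto
      next
        case False then show ?thesis using x unfolding B_def by auto
      qed
    qed
    show "insert (cls a) (insert (cls b) (cls ` B)) \<subseteq> cls ` A"
      using a unfolding B_def by auto
  qed
  have e2: "cls' ` A = insert (cls a \<union> cls b) (cls ` B)"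
  proof
    show "cls' ` A \<subseteq> insert (cls a \<union> cls b) (cls ` B)"
    proof
      fix y assume "y \<in> cls' ` A"
      then obtain x where x: "x \<in> A" "y = cls' x" by auto
      show "y \<in> insert (cls a \<union> cls b) (cls ` B)"
      proof (cases "x \<in> cls a \<union> cls b")
        case True then show ?thesis using inn[OF x(1)] x by simp
      next
        case False then have "x \<in> B" using x unfolding B_def by simp
        then show ?thesis using out[OF x(1) False] x by simp
      qed
    qed
    have ca: "cls' a = cls a \<union> cls b" using inn a cl by auto
    show "insert (cls a \<union> cls b) (cls ` B) \<subseteq> cls' ` A"
    proof
      fix y assume "y \<in> insert (cls a \<union> cls b) (cls ` B)"
      then show "y \<in> cls' ` A"
      proof
        assume "y = cls a \<union> cls b" then show ?thesis using ca a(1) by (metis image_eqI)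
      next
        assume "y \<in> cls ` B"
        then obtain x where x: "x \<in> B" "y = cls x" by auto
        then have "x \<in> A" "x \<notin> cls a \<union> cls b" unfolding B_def by auto
        then show ?thesis using out x(2) by (metis image_eqI)
      qed
    qed
  qed
  have n1: "cls a \<notin> cls ` B" "cls b \<notin> cls ` B" "cls a \<union> cls b \<notin> cls ` B"
  proof -
    have "x \<notin> cls a \<union> cls b" "x \<in> cls x" if "x \<in> B" for x using that cl unfolding B_def by auto
    then show "cls a \<notin> cls ` B" "cls b \<notin> cls ` B" "cls a \<union> cls b \<notin> cls ` B" by blast+
  qed
  have finB: "finite (cls ` B)" using fin unfolding B_def by auto
  show ?thesis unfolding e1 e2 using n1 finB a(3) by simp
qed

lemma split_card:
  assumes fin: "finite A" and cl: "\<And>x. x \<in> A \<Longrightarrow> x \<in> cls x"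
    and eq: "\<And>x y. x \<in> A \<Longrightarrow> y \<in> A \<Longrightarrow> y \<in> cls x \<Longrightarrow> cls y = cls x"
    and a: "a \<in> A" "cx \<in> A" "cy \<in> A" "cx \<in> cls a" "cy \<in> cls a"
    and p: "cx \<in> cls' cx" "cy \<in> cls' cy" "cls' cx \<noteq> cls' cy"
    and out: "\<And>x. x \<in> A \<Longrightarrow> x \<notin> cls a \<Longrightarrow> cls' x = cls x"
    and inn: "\<And>x. x \<in> A \<Longrightarrow> x \<in> cls a \<Longrightarrow> cls' x = cls' cx \<or> cls' x = cls' cy"
  shows "card (cls' ` A) = card (cls ` A) + 1"
proof -
  define B where "B = A - cls a"
  have e1: "cls ` A = insert (cls a) (cls ` B)"
  proof
    show "cls ` A \<subseteq> insert (cls a) (cls ` B)"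
    proof
      fix y assume "y \<in> cls ` A"
      then obtain x where x: "x \<in> A" "y = cls x" by auto
      show "y \<in> insert (cls a) (cls ` B)"
      proof (cases "x \<in> cls a")
        case True then show ?thesis using eq[OF a(1) x(1)] x by auto
      next
        case False then have "x \<in> B" using x unfolding B_def by simp
        then show ?thesis using x by simp
      qed
    qed
    show "insert (cls a) (cls ` B) \<subseteq> cls ` A" using a(1) unfolding B_def by auto
  qed
  have e2: "cls' ` A = insert (cls' cx) (insert (cls' cy) (cls ` B))"
  proof
    show "cls' ` A \<subseteq> insert (cls' cx) (insert (cls' cy) (cls ` B))"
    proof
      fix y assume "y \<in> cls' ` A"
      then obtain x where x: "x \<in> A" "y = cls' x" by auto
      show "y \<in> insert (cls' cx) (insert (cls' cy) (cls ` B))"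
      proof (cases "x \<in> cls a")
        case True then show ?thesis using inn[OF x(1)] x by auto
      next
        case False then have "x \<in> B" using x unfolding B_def by simp
        then show ?thesis using out[OF x(1) False] x by simp
      qed
    qed
    have "cls' ` B = cls ` B" unfolding B_def by (rule image_cong[OF refl]) (use out in auto)
    moreover have "cls' ` B \<subseteq> cls' ` A" unfolding B_def by auto
    moreover have "cls' cx \<in> cls' ` A" "cls' cy \<in> cls' ` A" using a(2,3) by auto
    ultimately show "insert (cls' cx) (insert (cls' cy) (cls ` B)) \<subseteq> cls' ` A" by auto
  qed
  have ca1: "cls cx = cls a" "cls cy = cls a" using eq[OF a(1) a(2) a(4)] eq[OF a(1) a(3) a(5)] by auto
  have n1: "cls a \<notin> cls ` B"
  proof
    assume "cls a \<in> cls ` B"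
    then obtain x where x: "x \<in> B" "cls a = cls x" by auto
    then show False using cl[of x] unfolding B_def by auto
  qed
  have n2: "cls' cx \<notin> cls ` B" "cls' cy \<notin> cls ` B"
  proof -
    show "cls' cx \<notin> cls ` B"
    proof
      assume "cls' cx \<in> cls ` B"
      then obtain x where x: "x \<in> A" "x \<notin> cls a" "cls' cx = cls x" unfolding B_def by auto
      then have "cls cx = cls x" using eq[OF x(1) a(2)] p(1) by auto
      then show False using ca1 cl[OF x(1)] x by auto
    qed
    show "cls' cy \<notin> cls ` B"
    proof
      assume "cls' cy \<in> cls ` B"
      then obtain x where x: "x \<in> A" "x \<notin> cls a" "cls' cy = cls x" unfolding B_def by auto
      then have "cls cy = cls x" using eq[OF x(1) a(3)] p(2) by auto
      then show False using ca1 cl[OF x(1)] x by auto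
    qed
  qed
  have finB: "finite (cls ` B)" using fin unfolding B_def by auto
  show ?thesis unfolding e1 e2 using n1 n2 finB p(3) by simp
qed

definition swp :: "('a \<Rightarrow> 'a) \<Rightarrow> 'a \<Rightarrow> 'a \<Rightarrow> 'a \<Rightarrow> 'a" where
  "swp f a b = (\<lambda>x. if x = a then f b else if x = b then f a else f x)"

lemma permA_swp:
  assumes "permA A f" "a \<in> A" "b \<in> A"
  shows "permA A (swp f a b)"
proof -
  have fin: "finite A" and im: "f ` A \<subseteq> A" and inj: "inj_on f A"
    using assms(1) unfolding permA_def by auto
  have "swp f a b ` A \<subseteq> A" using im assms(2,3) unfolding swp_def by auto
  moreover have "inj_on (swp f a b) A"
  proof (rule inj_onI)
    fix x y assume xy: "x \<in> A" "y \<in> A" "swp f a b x = swp f a b y"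
    have i: "f u = f v \<Longrightarrow> u \<in> A \<Longrightarrow> v \<in> A \<Longrightarrow> u = v" for u v using inj_onD[OF inj] by blast
    show "x = y"
      using xy i[of x y] i[of a b] i[of b a] i[of a y] i[of b y] i[of x a] i[of x b] assms(2,3)
      unfolding swp_def by (auto split: if_splits)
  qed
  ultimately show ?thesis using fin unfolding permA_def by auto
qed

lemma swp_same: "(\<And>i. i < n \<Longrightarrow> (f ^^ i) x \<noteq> a \<and> (f ^^ i) x \<noteq> b) \<Longrightarrow> (swp f a b ^^ n) x = (f ^^ n) x"
proof (induction n)
  case 0 then show ?case by simp
next
  case (Suc n)
  then have "(swp f a b ^^ n) x = (f ^^ n) x" by simp
  then show ?case using Suc.prems[of n] by (simp add: swp_def)
qed

lemma orb_step: "y \<in> orb f x \<Longrightarrow> f y \<in> orb f x"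
  using orb_trans funpow_in_orb[where n=1 and f=f and x=y] by fastforce

lemma orb_avoid:
  assumes "a \<notin> orb f x" "b \<notin> orb f x"
  shows "orb (swp f a b) x = orb f x"
proof -
  have "(swp f a b ^^ n) x = (f ^^ n) x" for n
    by (rule swp_same) (use assms funpow_in_orb[where f=f and x=x] in blast)
  then show ?thesis unfolding orb_def by simp
qed

lemma orb_closed:
  assumes "x \<in> U" "\<And>y. y \<in> U \<Longrightarrow> g y \<in> U"
  shows "orb g x \<subseteq> U"
proof -
  have "(g ^^ n) x \<in> U" for n by (induction n) (use assms in auto)
  then show ?thesis unfolding orb_def by auto
qed

lemma transp_diff:
  assumes pf: "permA A f" and a: "a \<in> A" "b \<in> A" "a \<noteq> b" and nb: "b \<notin> orb f a"
  shows "card (orb (swp f a b) ` A) + 1 = card (orb f ` A)"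
proof -
  define g where "g = swp f a b"
  have pg: "permA A g" unfolding g_def by (rule permA_swp[OF pf a(1,2)])
  have na: "a \<notin> orb f b" using orb_sym[OF pf a(2)] nb by blast
  define p where "p = per f b"
  define q where "q = per f a"
  note pb = per[OF pf a(2), folded p_def]
  note pa = per[OF pf a(1), folded q_def]
  have C1: "1 \<le> j \<Longrightarrow> j \<le> p \<Longrightarrow> (g ^^ j) a = (f ^^ j) b" for j
  proof (induction j)
    case 0 then show ?case by simp
  next
    case (Suc j)
    show ?case
    proof (cases "j = 0")
      case True then show ?thesis by (simp add: g_def swp_def)
    next
      case False
      then have "(g ^^ j) a = (f ^^ j) b" using Suc by simp
      moreover have "(f ^^ j) b \<noteq> a" using na funpow_in_orb[where f=f and n=j and x=b] by auto
      moreover have "(f ^^ j) b \<noteq> b" using pb(3)[of j] False Suc.prems by simp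
      ultimately show ?thesis by (simp add: g_def swp_def)
    qed
  qed
  have C2: "1 \<le> j \<Longrightarrow> j \<le> q \<Longrightarrow> (g ^^ (p + j)) a = (f ^^ j) a" for j
  proof (induction j)
    case 0 then show ?case by simp
  next
    case (Suc j)
    show ?case
    proof (cases "j = 0")
      case True
      have "(g ^^ p) a = b" using C1[of p] pb(1,2) by simp
      then show ?thesis using True a(3) by (simp add: g_def swp_def)
    next
      case False
      then have "(g ^^ (p + j)) a = (f ^^ j) a" using Suc by simp
      moreover have "(f ^^ j) a \<noteq> b" using nb funpow_in_orb[where f=f and n=j and x=a] by auto
      moreover have "(f ^^ j) a \<noteq> a" using pa(3)[of j] False Suc.prems by simp
      ultimately show ?thesis by (simp add: g_def swp_def)
    qed
  qed
  have U1: "orb g a \<subseteq> orb f a \<union> orb f b"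
  proof (rule orb_closed)
    show "a \<in> orb f a \<union> orb f b" using self_in_orb by fast
    fix y assume y: "y \<in> orb f a \<union> orb f b"
    have 1: "f b \<in> orb f b" "f a \<in> orb f a"
      using orb_step[OF self_in_orb[of b f]] orb_step[OF self_in_orb[of a f]] by auto
    have 2: "f y \<in> orb f a \<union> orb f b" using y orb_step[of y f a] orb_step[of y f b] by blast
    show "g y \<in> orb f a \<union> orb f b"
      using 1 2 unfolding g_def swp_def by simp
  qed
  have U2: "orb f a \<union> orb f b \<subseteq> orb g a"
  proof
    fix y assume "y \<in> orb f a \<union> orb f b"
    then show "y \<in> orb g a"
    proof
      assume "y \<in> orb f a"
      then obtain i where "1 \<le> i" "i \<le> q" "y = (f ^^ i) a" using orbN[OF pa(2,1)] by blast
      then have "y = (g ^^ (p + i)) a" using C2[of i] by simp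
      then show ?thesis by (simp add: funpow_in_orb)
    next
      assume "y \<in> orb f b"
      then obtain i where "1 \<le> i" "i \<le> p" "y = (f ^^ i) b" using orbN[OF pb(2,1)] by blast
      then have "y = (g ^^ i) a" using C1[of i] by simp
      then show ?thesis by (simp add: funpow_in_orb)
    qed
  qed
  have U: "orb g a = orb f a \<union> orb f b" using U1 U2 by blast
  have "card (orb g ` A) + 1 = card (orb f ` A)"
  proof (rule merge_card[where cls = "orb f" and a = a and b = b])
    show "finite A" using pf unfolding permA_def by auto
    show "\<And>x. x \<in> A \<Longrightarrow> x \<in> orb f x" by (rule self_in_orb)
    show "\<And>x y. x \<in> A \<Longrightarrow> y \<in> A \<Longrightarrow> y \<in> orb f x \<Longrightarrow> orb f y = orb f x"
      by (rule orb_eq[OF pf])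
    show "a \<in> A" "b \<in> A" using a by auto
    show "orb f a \<noteq> orb f b" using nb self_in_orb[of b f] by auto
    show "orb g x = orb f x" if "x \<in> A" "x \<notin> orb f a \<union> orb f b" for x
    proof -
      have "a \<notin> orb f x" using orb_sym[OF pf that(1), of a] that by blast
      moreover have "b \<notin> orb f x" using orb_sym[OF pf that(1), of b] that by blast
      ultimately show ?thesis unfolding g_def by (rule orb_avoid)
    qed
    show "orb g x = orb f a \<union> orb f b" if "x \<in> A" "x \<in> orb f a \<union> orb f b" for x
      using orb_eq[OF pg a(1), of x] that U by auto
  qed
  then show ?thesis unfolding g_def .
qed

lemma transp_same:
  assumes pf: "permA A f" and a: "a \<in> A" "b \<in> A" "a \<noteq> b" and nb: "b \<in> orb f a"
  shows "card (orb (swp f a b) ` A) = card (orb f ` A) + 1"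
proof -
  define g where "g = swp f a b"
  have pg: "permA A g" unfolding g_def by (rule permA_swp[OF pf a(1,2)])
  define q where "q = per f a"
  note pa = per[OF pf a(1), folded q_def]
  have dist: "i < q \<Longrightarrow> j < q \<Longrightarrow> (f ^^ i) a = (f ^^ j) a \<Longrightarrow> i = j" for i j
    using per_distinct[OF pf a(1)] unfolding q_def by blast
  obtain m where m: "1 \<le> m" "m \<le> q" "b = (f ^^ m) a" using orbN[OF pa(2,1) nb] by blast
  have mq: "m < q" using m pa(2) a(3) by (cases "m = q") auto
  have C3: "1 \<le> j \<Longrightarrow> j \<le> m \<Longrightarrow> (g ^^ j) b = (f ^^ j) a" for j
  proof (induction j)
    case 0 then show ?case by simp
  next
    case (Suc j)
    show ?case
    proof (cases "j = 0")
      case True then show ?thesis using a(3) by (simp add: g_def swp_def)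
    next
      case False
      then have "(g ^^ j) b = (f ^^ j) a" using Suc by simp
      moreover have "(f ^^ j) a \<noteq> b" using dist[of j m] m mq Suc.prems by auto
      moreover have "(f ^^ j) a \<noteq> a" using pa(3)[of j] False Suc.prems mq by simp
      ultimately show ?thesis by (simp add: g_def swp_def)
    qed
  qed
  have C4: "1 \<le> j \<Longrightarrow> j \<le> q - m \<Longrightarrow> (g ^^ j) a = (f ^^ (m + j)) a" for j
  proof (induction j)
    case 0 then show ?case by simp
  next
    case (Suc j)
    show ?case
    proof (cases "j = 0")
      case True then show ?thesis using m by (simp add: g_def swp_def)
    next
      case False
      then have "(g ^^ j) a = (f ^^ (m + j)) a" using Suc by simp
      moreover have "m + j < q" using Suc.prems by simp
      then have "(f ^^ (m + j)) a \<noteq> b" using dist[of "m + j" m] m False mq by auto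
      moreover have "(f ^^ (m + j)) a \<noteq> a" using pa(3)[of "m + j"] False Suc.prems mq by simp
      ultimately show ?thesis by (simp add: g_def swp_def)
    qed
  qed
  have gb: "(g ^^ m) b = b" using C3[of m] m by simp
  have ga: "(g ^^ (q - m)) a = a" using C4[of "q - m"] mq pa(2) by simp
  have bnot: "b \<notin> orb g a"
  proof
    assume "b \<in> orb g a"
    then obtain i where i: "1 \<le> i" "i \<le> q - m" "b = (g ^^ i) a" using orbN[OF ga] mq by auto
    then have "b = (f ^^ (m + i)) a" using C4 by simp
    show False
    proof (cases "m + i = q")
      case True then show False using \<open>b = (f ^^ (m + i)) a\<close> pa(2) a(3) by simp
    next
      case False
      then have "m + i < q" using i mq by simp
      then show False using dist[of "m + i" m] \<open>b = (f ^^ (m + i)) a\<close> m i mq by auto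
    qed
  qed
  have "card (orb g ` A) = card (orb f ` A) + 1"
  proof (rule split_card[where cls = "orb f" and a = a and cx = a and cy = b])
    show "finite A" using pf unfolding permA_def by auto
    show "\<And>x. x \<in> A \<Longrightarrow> x \<in> orb f x" by (rule self_in_orb)
    show "\<And>x y. x \<in> A \<Longrightarrow> y \<in> A \<Longrightarrow> y \<in> orb f x \<Longrightarrow> orb f y = orb f x"
      by (rule orb_eq[OF pf])
    show "a \<in> A" "a \<in> A" "b \<in> A" "a \<in> orb f a" "b \<in> orb f a" using a nb self_in_orb by auto
    show "a \<in> orb g a" "b \<in> orb g b" by (rule self_in_orb)+
    show "orb g a \<noteq> orb g b" using bnot self_in_orb[of b g] by auto
    show "orb g x = orb f x" if "x \<in> A" "x \<notin> orb f a" for x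
    proof -
      have "a \<notin> orb f x" using orb_sym[OF pf that(1), of a] that by blast
      moreover have "b \<notin> orb f x"
        using orb_sym[OF pf that(1)] orb_eq[OF pf a(1) nb] that by blast
      ultimately show ?thesis unfolding g_def by (rule orb_avoid)
    qed
    show "orb g x = orb g a \<or> orb g x = orb g b" if xA: "x \<in> A" and xO: "x \<in> orb f a" for x
    proof -
      obtain i where i: "1 \<le> i" "i \<le> q" "x = (f ^^ i) a" using orbN[OF pa(2,1) xO] by blast
      show ?thesis
      proof (cases "i \<le> m")
        case True
        then have "x = (g ^^ i) b" using C3[of i] i by simp
        then have "x \<in> orb g b" by (simp add: funpow_in_orb)
        then show ?thesis using orb_eq[OF pg a(2)] by blast
      next
        case False
        then have "x = (g ^^ (i - m)) a" using C4[of "i - m"] i by simp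
        then have "x \<in> orb g a" by (simp add: funpow_in_orb)
        then show ?thesis using orb_eq[OF pg a(1)] by blast
      qed
    qed
  qed
  then show ?thesis unfolding g_def .
qed

lemma first_return:
  assumes gB: "g ` B \<subseteq> B"
    and ret: "\<And>x. x \<in> B \<Longrightarrow> \<exists>n>0. g x = (f ^^ n) x \<and> (\<forall>i. 0 < i \<and> i < n \<longrightarrow> (f ^^ i) x \<notin> B)"
    and x: "x \<in> B"
  shows "orb g x = orb f x \<inter> B"
proof
  have "(g ^^ k) x \<in> orb f x \<inter> B" for k
  proof (induction k)
    case 0 then show ?case using x self_in_orb[of x f] by simp
  next
    case (Suc k)
    then have k: "(g ^^ k) x \<in> orb f x" "(g ^^ k) x \<in> B" by auto
    obtain n where "g ((g ^^ k) x) = (f ^^ n) ((g ^^ k) x)" using ret[OF k(2)] by blast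
    moreover have "(f ^^ n) ((g ^^ k) x) \<in> orb f x"
      using orb_trans[OF k(1)] funpow_in_orb[where f=f and n=n and x="(g ^^ k) x"] by blast
    moreover have "g ((g ^^ k) x) \<in> B" using gB k(2) by blast
    ultimately show ?case by simp
  qed
  then show "orb g x \<subseteq> orb f x \<inter> B" unfolding orb_def by blast
next
  have main: "\<And>y. y \<in> B \<Longrightarrow> (f ^^ m) y \<in> B \<Longrightarrow> \<exists>k. (g ^^ k) y = (f ^^ m) y" for m
  proof (induction m rule: less_induct)
    case (less m)
    fix y assume y: "y \<in> B" and fy: "(f ^^ m) y \<in> B"
    show "\<exists>k. (g ^^ k) y = (f ^^ m) y"
    proof (cases "m = 0")
      case True then show ?thesis by (intro exI[of _ 0]) simp
    next
      case False
      obtain n where n: "n > 0" "g y = (f ^^ n) y" "\<forall>i. 0 < i \<and> i < n \<longrightarrow> (f ^^ i) y \<notin> B"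
        using ret[OF y] by blast
      have "n \<le> m" using n(3) False fy by (meson not_less neq0_conv)
      then have "(f ^^ m) y = (f ^^ (m - n)) (g y)" using n(2) funpow_split[where f=f and a="m - n" and b=n and x=y] by simp
      moreover have "g y \<in> B" using gB y by blast
      moreover have "m - n < m" using n(1) False by simp
      ultimately obtain k where "(g ^^ k) (g y) = (f ^^ m) y" using less.IH[of "m - n" "g y"] fy by auto
      then have "(g ^^ (Suc k)) y = (f ^^ m) y" by (simp add: funpow_Suc_right del: funpow.simps)
      then show ?thesis by blast
    qed
  qed
  show "orb f x \<inter> B \<subseteq> orb g x"
  proof
    fix y assume "y \<in> orb f x \<inter> B"
    then obtain m where "y = (f ^^ m) x" "y \<in> B" by (auto elim: orbE)
    then obtain k where "(g ^^ k) x = y" using main[OF x] by blast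
    then show "y \<in> orb g x" using funpow_in_orb[where f=g and n=k and x=x] by simp
  qed
qed

lemma card_orb_restrict:
  assumes pf: "permA A f" and B: "B \<subseteq> A"
  shows "card ((\<lambda>x. orb f x \<inter> B) ` B) = card (orb f ` B)"
proof -
  have "(\<lambda>x. orb f x \<inter> B) ` B = (\<lambda>Z. Z \<inter> B) ` (orb f ` B)" by auto
  moreover have "inj_on (\<lambda>Z. Z \<inter> B) (orb f ` B)"
  proof (rule inj_onI)
    fix Z1 Z2 assume "Z1 \<in> orb f ` B" "Z2 \<in> orb f ` B" and e: "Z1 \<inter> B = Z2 \<inter> B"
    then obtain x y where xy: "x \<in> B" "y \<in> B" "Z1 = orb f x" "Z2 = orb f y" by auto
    have "x \<in> Z2" using e xy self_in_orb[of x f] by auto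
    then have "orb f x = orb f y" using orb_eq[OF pf, of y x] xy B by auto
    then show "Z1 = Z2" using xy by simp
  qed
  ultimately show ?thesis by (simp add: card_image)
qed

lemma card_image_sets:
  assumes "inj_on h C" "\<And>x. x \<in> A \<Longrightarrow> Q x \<subseteq> C"
  shows "card ((\<lambda>x. h ` Q x) ` A) = card (Q ` A)"
proof -
  have "(\<lambda>x. h ` Q x) ` A = (image h) ` (Q ` A)" by auto
  moreover have "inj_on (image h) (Q ` A)"
  proof (rule inj_onI)
    fix X Y assume "X \<in> Q ` A" "Y \<in> Q ` A" "h ` X = h ` Y"
    then show "X = Y" using inj_on_image_eq_iff[OF assms(1)] assms(2) by blast
  qed
  ultimately show ?thesis by (simp add: card_image)
qed

lemma orb_cong:
  assumes "\<And>y. y \<in> A \<Longrightarrow> f y = g y" "f ` A \<subseteq> A" "x \<in> A"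
  shows "orb f x = orb g x"
proof -
  have "(f ^^ n) x = (g ^^ n) x \<and> (f ^^ n) x \<in> A" for n
  proof (induction n)
    case 0 then show ?case using assms(3) by simp
  next
    case (Suc n) then show ?case using assms(1,2) by auto
  qed
  then show ?thesis unfolding orb_def by simp
qed

lemma quotient_image: "A // r = (\<lambda>x. r `` {x}) ` A"
  unfolding quotient_def by auto

definition alF :: "('d \<Rightarrow> 'd) \<Rightarrow> 'd set set \<Rightarrow> 'd \<Rightarrow> 'd" where
  "alF \<alpha> F y = (if {y, \<alpha> y} \<in> F then \<alpha> y else y)"

definition psi :: "('d \<Rightarrow> 'd) \<Rightarrow> ('d \<Rightarrow> 'd) \<Rightarrow> 'd set set \<Rightarrow> 'd \<Rightarrow> 'd" where
  "psi \<sigma> \<alpha> F x = alF \<alpha> F (\<sigma> x)"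

locale RG =
  fixes V :: "'v set" and D :: "'d set" and vert :: "'d \<Rightarrow> 'v" and \<sigma> \<alpha> :: "'d \<Rightarrow> 'd"
  assumes rg: "ribbon_graph V D vert \<sigma> \<alpha>"
begin

lemma rg_facts:
  shows finV: "finite V" and finD: "finite D" and vertD: "\<And>h. h \<in> D \<Longrightarrow> vert h \<in> V"
    and alD: "\<And>h. h \<in> D \<Longrightarrow> \<alpha> h \<in> D" and alne: "\<And>h. h \<in> D \<Longrightarrow> \<alpha> h \<noteq> h"
    and alal: "\<And>h. h \<in> D \<Longrightarrow> \<alpha> (\<alpha> h) = h"
    and siD: "\<And>h. h \<in> D \<Longrightarrow> \<sigma> h \<in> D" and siinj: "inj_on \<sigma> D" and sisurj: "\<sigma> ` D = D"
    and vsi: "\<And>h. h \<in> D \<Longrightarrow> vert (\<sigma> h) = vert h"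
    and siorb: "\<And>h h'. h \<in> D \<Longrightarrow> h' \<in> D \<Longrightarrow> vert h = vert h' \<Longrightarrow> \<exists>n. (\<sigma> ^^ n) h = h'"
  using rg unfolding ribbon_graph_def bij_betw_def by auto

lemma perm_si: "permA D \<sigma>"
  unfolding permA_def using finD siD siinj by auto

lemma si_funpow_vert: "h \<in> D \<Longrightarrow> vert ((\<sigma> ^^ n) h) = vert h \<and> (\<sigma> ^^ n) h \<in> D"
  by (induction n) (auto simp: vsi siD)

lemma orb_si: "x \<in> D \<Longrightarrow> orb \<sigma> x = {g \<in> D. vert g = vert x}"
proof
  assume x: "x \<in> D"
  show "orb \<sigma> x \<subseteq> {g \<in> D. vert g = vert x}" using si_funpow_vert[OF x] unfolding orb_def by auto
  show "{g \<in> D. vert g = vert x} \<subseteq> orb \<sigma> x"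
  proof
    fix g assume "g \<in> {g \<in> D. vert g = vert x}"
    then obtain n where "(\<sigma> ^^ n) x = g" using siorb[OF x, of g] by auto
    then show "g \<in> orb \<sigma> x" using funpow_in_orb[where f=\<sigma> and n=n and x=x] by simp
  qed
qed

abbreviation "EE \<equiv> rg_edges D \<alpha>"

lemma edge_pair: "h \<in> D \<Longrightarrow> {\<alpha> h, \<alpha> (\<alpha> h)} = {h, \<alpha> h}"
  using alal by auto

lemma EE_sub: "e \<in> EE \<Longrightarrow> e \<subseteq> D"
  unfolding rg_edges_def using alD by auto

lemma in_edge: "e \<in> EE \<Longrightarrow> y \<in> e \<Longrightarrow> e = {y, \<alpha> y}"
  unfolding rg_edges_def using alal by auto

lemma edge_in_EE: "y \<in> D \<Longrightarrow> {y, \<alpha> y} \<in> EE"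
  unfolding rg_edges_def by auto

lemma mem_Union_F: "F \<subseteq> EE \<Longrightarrow> y \<in> D \<Longrightarrow> y \<in> \<Union>F \<longleftrightarrow> {y, \<alpha> y} \<in> F"
proof
  assume "F \<subseteq> EE" "y \<in> D" "y \<in> \<Union>F"
  then obtain e where "e \<in> F" "y \<in> e" by auto
  then show "{y, \<alpha> y} \<in> F" using in_edge[of e y] \<open>F \<subseteq> EE\<close> by auto
qed auto

lemma Union_F_sub: "F \<subseteq> EE \<Longrightarrow> \<Union>F \<subseteq> D"
  using EE_sub by blast

lemma alF_D: "y \<in> D \<Longrightarrow> alF \<alpha> F y \<in> D"
  unfolding alF_def using alD by auto

lemma alF_alF: "y \<in> D \<Longrightarrow> alF \<alpha> F (alF \<alpha> F y) = y"
  unfolding alF_def using alal edge_pair by (auto simp: insert_commute)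

lemma psi_D: "x \<in> D \<Longrightarrow> psi \<sigma> \<alpha> F x \<in> D"
  unfolding psi_def using alF_D siD by auto

lemma perm_psi: "permA D (psi \<sigma> \<alpha> F)"
proof -
  have "inj_on (psi \<sigma> \<alpha> F) D"
  proof (rule inj_onI)
    fix x y assume xy: "x \<in> D" "y \<in> D" "psi \<sigma> \<alpha> F x = psi \<sigma> \<alpha> F y"
    then have "alF \<alpha> F (alF \<alpha> F (\<sigma> x)) = alF \<alpha> F (alF \<alpha> F (\<sigma> y))" unfolding psi_def by simp
    then have "\<sigma> x = \<sigma> y" using alF_alF siD xy by simp
    then show "x = y" using siinj xy inj_onD by metis
  qed
  then show ?thesis unfolding permA_def using finD psi_D by auto
qed

end

context RG begin

lemma alS: "F \<subseteq> EE \<Longrightarrow> y \<in> \<Union>F \<Longrightarrow> \<alpha> y \<in> \<Union>F"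
proof -
  assume F: "F \<subseteq> EE" and y: "y \<in> \<Union>F"
  have yD: "y \<in> D" using y Union_F_sub[OF F] by auto
  have "{y, \<alpha> y} \<in> F" using mem_Union_F[OF F yD] y by simp
  then show "\<alpha> y \<in> \<Union>F" by auto
qed

lemma iter_avoid:
  assumes F: "F \<subseteq> EE" and y: "y \<in> D" and av: "\<And>n. (psi \<sigma> \<alpha> F ^^ n) y \<notin> \<Union>F"
  shows "(psi \<sigma> \<alpha> F ^^ n) y = (\<sigma> ^^ n) y"
proof (induction n)
  case 0 then show ?case by simp
next
  case (Suc n)
  define z where "z = \<sigma> ((\<sigma> ^^ n) y)"
  have zD: "z \<in> D" unfolding z_def using si_funpow_vert[OF y, of n] siD by auto
  have e: "(psi \<sigma> \<alpha> F ^^ Suc n) y = alF \<alpha> F z"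
  proof -
    have "(psi \<sigma> \<alpha> F ^^ Suc n) y = psi \<sigma> \<alpha> F ((psi \<sigma> \<alpha> F ^^ n) y)" by simp
    also have "\<dots> = psi \<sigma> \<alpha> F ((\<sigma> ^^ n) y)" using Suc.IH by simp
    finally show ?thesis by (simp add: psi_def z_def)
  qed
  show ?case
  proof (cases "{z, \<alpha> z} \<in> F")
    case True
    then have "(psi \<sigma> \<alpha> F ^^ Suc n) y = \<alpha> z" using e by (simp add: alF_def)
    moreover have "\<alpha> z \<in> \<Union>F" using True by auto
    ultimately show ?thesis using av[of "Suc n"] by simp
  next
    case False then show ?thesis using e by (simp add: alF_def z_def)
  qed
qed

lemma iter_avoid2:
  assumes F: "F \<subseteq> EE" and y: "y \<in> D" and av: "\<And>n. (\<sigma> ^^ n) y \<notin> \<Union>F"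
  shows "(psi \<sigma> \<alpha> F ^^ n) y = (\<sigma> ^^ n) y"
proof (induction n)
  case 0 then show ?case by simp
next
  case (Suc n)
  define z where "z = \<sigma> ((\<sigma> ^^ n) y)"
  have zD: "z \<in> D" unfolding z_def using si_funpow_vert[OF y, of n] siD by auto
  have e: "(psi \<sigma> \<alpha> F ^^ Suc n) y = alF \<alpha> F z"
  proof -
    have "(psi \<sigma> \<alpha> F ^^ Suc n) y = psi \<sigma> \<alpha> F ((psi \<sigma> \<alpha> F ^^ n) y)" by simp
    also have "\<dots> = psi \<sigma> \<alpha> F ((\<sigma> ^^ n) y)" using Suc.IH by simp
    finally show ?thesis by (simp add: psi_def z_def)
  qed
  have "z \<notin> \<Union>F" using av[of "Suc n"] by (simp add: z_def)
  then have "{z, \<alpha> z} \<notin> F" using mem_Union_F[OF F zD] by simp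
  then show ?case using e by (simp add: alF_def z_def)
qed

lemma bc_eq:
  assumes F: "F \<subseteq> EE"
  shows "rg_bc V vert \<sigma> \<alpha> F = card (orb (psi \<sigma> \<alpha> F) ` D) + med_loops V D vert"
proof -
  define S where "S = \<Union>F"
  define f where "f = psi \<sigma> \<alpha> F"
  have SD: "S \<subseteq> D" unfolding S_def using Union_F_sub[OF F] .
  have memS: "y \<in> D \<Longrightarrow> y \<in> S \<longleftrightarrow> {y, \<alpha> y} \<in> F" for y unfolding S_def using mem_Union_F[OF F] by simp
  have alS': "y \<in> S \<Longrightarrow> \<alpha> y \<in> S" for y unfolding S_def using alS[OF F] by simp
  have pf: "permA D f" unfolding f_def by (rule perm_psi)
  define N where "N x = (LEAST n. 0 < n \<and> (\<sigma> ^^ n) x \<in> S)" for x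
  have Nprops: "0 < N x \<and> (\<sigma> ^^ N x) x \<in> S \<and> (\<forall>i. 0 < i \<and> i < N x \<longrightarrow> (\<sigma> ^^ i) x \<notin> S)"
    if x: "x \<in> S" for x
  proof -
    obtain p where p: "p > 0" "(\<sigma> ^^ p) x = x" using periodic[OF perm_si, of x] x SD by auto
    have ex: "\<exists>n. 0 < n \<and> (\<sigma> ^^ n) x \<in> S" using p x by auto
    show ?thesis using LeastI_ex[OF ex] not_less_Least[of _ "\<lambda>n. 0 < n \<and> (\<sigma> ^^ n) x \<in> S"]
      unfolding N_def by auto
  qed
  define \<rho> where "\<rho> = induced_rot \<sigma> S"
  have rho: "\<rho> x = (\<sigma> ^^ N x) x" for x unfolding \<rho>_def induced_rot_def N_def by simp
  have rhoS: "x \<in> S \<Longrightarrow> \<rho> x \<in> S" for x using Nprops rho by auto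
  define g where "g x = \<alpha> (\<rho> x)" for x
  have gS: "g ` S \<subseteq> S" unfolding g_def using rhoS alS' by auto
  have iter: "(f ^^ i) x = (\<sigma> ^^ i) x" if x: "x \<in> S" and i: "i < N x" for x i
    using i
  proof (induction i)
    case 0 then show ?case by simp
  next
    case (Suc i)
    define z where "z = \<sigma> ((\<sigma> ^^ i) x)"
    have zD: "z \<in> D" unfolding z_def using si_funpow_vert[of x i] siD x SD by auto
    have "z \<notin> S" using Nprops[OF x] Suc.prems unfolding z_def by auto
    then have "{z, \<alpha> z} \<notin> F" using memS[OF zD] by simp
    then show ?case using Suc by (simp add: f_def psi_def alF_def z_def)
  qed
  have fret: "(f ^^ N x) x = g x" if x: "x \<in> S" for x
  proof -
    obtain k where k: "N x = Suc k" using Nprops[OF x] gr0_implies_Suc by blast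
    have "(f ^^ k) x = (\<sigma> ^^ k) x" using iter[OF x] k by simp
    then have "(f ^^ N x) x = alF \<alpha> F (\<sigma> ((\<sigma> ^^ k) x))" using k by (simp add: f_def psi_def)
    also have "\<sigma> ((\<sigma> ^^ k) x) = \<rho> x" using rho k by simp
    also have "alF \<alpha> F (\<rho> x) = \<alpha> (\<rho> x)"
      using rhoS[OF x] memS SD by (auto simp: alF_def)
    finally show ?thesis unfolding g_def .
  qed
  have FR: "orb g x = orb f x \<inter> S" if x: "x \<in> S" for x
  proof (rule first_return[OF gS _ x])
    fix y assume y: "y \<in> S"
    show "\<exists>n>0. g y = (f ^^ n) y \<and> (\<forall>i. 0 < i \<and> i < n \<longrightarrow> (f ^^ i) y \<notin> S)"
      using Nprops[OF y] fret[OF y] iter[OF y] by (intro exI[of _ "N y"]) auto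
  qed
  define \<phi> where "\<phi> = \<rho> \<circ> \<alpha>"
  have gpow: "(g ^^ n) x \<in> S" if "x \<in> S" for x n using funpow_in[OF gS that] .
  have phipow: "(\<phi> ^^ n) h = \<alpha> ((g ^^ n) (\<alpha> h))" if h: "h \<in> S" for h n
  proof (induction n)
    case 0 then show ?case using h SD alal by auto
  next
    case (Suc n)
    have a: "(g ^^ n) (\<alpha> h) \<in> S" using gpow alS'[OF h] by blast
    have "(\<phi> ^^ Suc n) h = \<phi> ((\<phi> ^^ n) h)" by simp
    also have "\<dots> = \<phi> (\<alpha> ((g ^^ n) (\<alpha> h)))" using Suc.IH by simp
    also have "\<dots> = \<rho> (\<alpha> (\<alpha> ((g ^^ n) (\<alpha> h))))" by (simp add: \<phi>_def)
    also have "\<dots> = \<rho> ((g ^^ n) (\<alpha> h))" using a SD alal by auto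
    also have "\<dots> = \<alpha> ((g ^^ Suc n) (\<alpha> h))" using rhoS[OF a] SD alal by (auto simp: g_def)
    finally show ?case .
  qed
  define Rel where "Rel = {(h, h'). h \<in> S \<and> h' \<in> S \<and> (\<exists>n. ((induced_rot \<sigma> S \<circ> \<alpha>) ^^ n) h = h')}"
  have Rel_cls: "Rel `` {h} = \<alpha> ` orb g (\<alpha> h)" if h: "h \<in> S" for h
  proof -
    have "Rel `` {h} = {h'. h' \<in> S \<and> (\<exists>n. (\<phi> ^^ n) h = h')}"
      unfolding Rel_def \<phi>_def \<rho>_def using h by auto
    also have "\<dots> = {h'. \<exists>n. \<alpha> ((g ^^ n) (\<alpha> h)) = h'}"
      using phipow[OF h] gpow[OF alS'[OF h]] alS' by auto
    also have "\<dots> = \<alpha> ` orb g (\<alpha> h)" unfolding orb_def by auto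
    finally show ?thesis .
  qed
  have alinj: "inj_on \<alpha> D" using rg unfolding ribbon_graph_def bij_betw_def by auto
  have alSS: "\<alpha> ` S = S"
  proof
    show "\<alpha> ` S \<subseteq> S" using alS' by auto
    show "S \<subseteq> \<alpha> ` S"
    proof
      fix y assume "y \<in> S"
      then have "y = \<alpha> (\<alpha> y)" "\<alpha> y \<in> S" using alal SD alS' by auto
      then show "y \<in> \<alpha> ` S" by blast
    qed
  qed
  have c1: "card (S // Rel) = card (orb f ` S)"
  proof -
    have "S // Rel = (\<lambda>h. \<alpha> ` orb g (\<alpha> h)) ` S"
      unfolding quotient_image using Rel_cls by (intro image_cong) auto
    then have "card (S // Rel) = card ((\<lambda>h. \<alpha> ` orb g (\<alpha> h)) ` S)" by simp
    also have "\<dots> = card ((\<lambda>h. orb g (\<alpha> h)) ` S)"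
    proof (rule card_image_sets[OF alinj])
      fix h assume "h \<in> S"
      then show "orb g (\<alpha> h) \<subseteq> D" using orb_subset[OF gS alS'] SD by blast
    qed
    also have "(\<lambda>h. orb g (\<alpha> h)) ` S = (\<lambda>h. orb f (\<alpha> h) \<inter> S) ` S"
      using FR alS' by (intro image_cong) auto
    also have "\<dots> = (\<lambda>x. orb f x \<inter> S) ` (\<alpha> ` S)" by (simp add: image_image)
    also have "\<dots> = (\<lambda>x. orb f x \<inter> S) ` S" using alSS by simp
    finally show ?thesis using card_orb_restrict[OF pf SD] by simp
  qed
  define W where "W = {v \<in> V. (\<exists>h\<in>D. vert h = v) \<and> (\<forall>h\<in>S. vert h \<noteq> v)}"
  define L where "L = {v \<in> V. \<forall>h\<in>D. vert h \<noteq> v}"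
  define NN where "NN = {x \<in> D. orb f x \<inter> S = {}}"
  have orbNN: "orb f y = {g \<in> D. vert g = vert y}" if y: "y \<in> NN" for y
  proof -
    have yD: "y \<in> D" using y unfolding NN_def by auto
    have "(f ^^ n) y \<notin> S" for n using y funpow_in_orb[where f=f and n=n and x=y] unfolding NN_def by auto
    then have "(f ^^ n) y = (\<sigma> ^^ n) y" for n using iter_avoid[OF F yD] unfolding f_def S_def by blast
    then have "orb f y = orb \<sigma> y" unfolding orb_def by simp
    then show ?thesis using orb_si[OF yD] by simp
  qed
  have vNN: "vert ` NN = W"
  proof
    show "vert ` NN \<subseteq> W"
    proof
      fix v assume "v \<in> vert ` NN"
      then obtain y where y: "y \<in> NN" "v = vert y" by auto
      have yD: "y \<in> D" using y unfolding NN_def by auto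
      have "\<forall>h\<in>S. vert h \<noteq> v"
      proof (intro ballI notI)
        fix h assume "h \<in> S" "vert h = v"
        then have "h \<in> orb f y" using orbNN[OF y(1)] y SD by auto
        then show False using \<open>h \<in> S\<close> y unfolding NN_def by auto
      qed
      then show "v \<in> W" unfolding W_def using y yD vertD by auto
    qed
    show "W \<subseteq> vert ` NN"
    proof
      fix v assume v: "v \<in> W"
      then obtain h where h: "h \<in> D" "vert h = v" unfolding W_def by auto
      have av: "(\<sigma> ^^ n) h \<notin> S" for n using si_funpow_vert[OF h(1), of n] v h unfolding W_def by auto
      have "(f ^^ n) h = (\<sigma> ^^ n) h" for n using iter_avoid2[OF F h(1)] av unfolding f_def S_def by blast
      then have "orb f h = orb \<sigma> h" unfolding orb_def by simp
      then have "orb f h \<inter> S = {}" using av unfolding orb_def by auto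
      then have "h \<in> NN" unfolding NN_def using h by auto
      then show "v \<in> vert ` NN" using h by auto
    qed
  qed
  have c2: "card (orb f ` D) = card (orb f ` S) + card W"
  proof -
    have U: "orb f ` D = orb f ` S \<union> orb f ` NN"
    proof
      show "orb f ` D \<subseteq> orb f ` S \<union> orb f ` NN"
      proof
        fix Z assume "Z \<in> orb f ` D"
        then obtain x where x: "x \<in> D" "Z = orb f x" by auto
        show "Z \<in> orb f ` S \<union> orb f ` NN"
        proof (cases "orb f x \<inter> S = {}")
          case True then show ?thesis using x unfolding NN_def by auto
        next
          case False
          then obtain y where y: "y \<in> orb f x" "y \<in> S" by auto
          then have "orb f y = orb f x" using orb_eq[OF pf x(1)] by blast
          then show ?thesis using x y by auto
        qed
      qed
      show "orb f ` S \<union> orb f ` NN \<subseteq> orb f ` D" using SD unfolding NN_def by auto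
    qed
    have disj: "orb f ` S \<inter> orb f ` NN = {}"
    proof (rule ccontr)
      assume "orb f ` S \<inter> orb f ` NN \<noteq> {}"
      then obtain x y where "x \<in> S" "y \<in> NN" "orb f x = orb f y" by auto
      then show False using self_in_orb[of x f] unfolding NN_def by auto
    qed
    have fin: "finite (orb f ` S)" "finite (orb f ` NN)" using finD SD unfolding NN_def
      by (auto intro: finite_subset)
    have "card (orb f ` NN) = card W"
    proof -
      have "orb f ` NN = (\<lambda>v. {g \<in> D. vert g = v}) ` (vert ` NN)"
        using orbNN by (auto simp: image_image)
      moreover have "inj_on (\<lambda>v. {g \<in> D. vert g = v}) W"
      proof (rule inj_onI)
        fix v w assume "v \<in> W" "w \<in> W" "{g \<in> D. vert g = v} = {g \<in> D. vert g = w}"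
        then show "v = w" unfolding W_def by blast
      qed
      ultimately show ?thesis using vNN by (simp add: card_image)
    qed
    then show ?thesis using U disj fin card_Un_disjoint by metis
  qed
  have c3: "card {v \<in> V. \<forall>h\<in>S. vert h \<noteq> v} = card W + card L"
  proof -
    have "{v \<in> V. \<forall>h\<in>S. vert h \<noteq> v} = W \<union> L" unfolding W_def L_def using SD by auto
    moreover have "W \<inter> L = {}" unfolding W_def L_def by auto
    moreover have "finite W" "finite L" unfolding W_def L_def using finV by auto
    ultimately show ?thesis by (simp add: card_Un_disjoint)
  qed
  have "rg_bc V vert \<sigma> \<alpha> F = card (S // Rel) + card {v \<in> V. \<forall>h\<in>S. vert h \<noteq> v}"
    unfolding rg_bc_def Let_def S_def Rel_def by simp
  also have "\<dots> = card (orb f ` D) + card L" using c1 c2 c3 by simp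
  finally show ?thesis unfolding f_def L_def med_loops_def .
qed

end

lemma rtrancl_orb:
  assumes pf: "permA P f" and p: "p \<in> P"
  shows "(({(q, f q) | q. q \<in> P} \<union> {(q, f q) | q. q \<in> P}\<inverse>)\<^sup>*) `` {p} = orb f p"
proof
  let ?G = "{(q, f q) | q. q \<in> P}"
  have im: "f ` P \<subseteq> P" using pf unfolding permA_def by auto
  show "(?G \<union> ?G\<inverse>)\<^sup>* `` {p} \<subseteq> orb f p"
  proof
    fix y assume "y \<in> (?G \<union> ?G\<inverse>)\<^sup>* `` {p}"
    then have "(p, y) \<in> (?G \<union> ?G\<inverse>)\<^sup>*" by simp
    then show "y \<in> orb f p"
    proof (induction rule: rtrancl_induct)
      case base then show ?case by (rule self_in_orb)
    next
      case (step y z)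
      have yP: "y \<in> P" using orb_subset[OF im p] step.IH by blast
      from step.hyps(2) show ?case
      proof
        assume "(y, z) \<in> ?G" then have "z = f y" by auto
        then show ?thesis using orb_step[OF step.IH] by simp
      next
        assume "(y, z) \<in> ?G\<inverse>" then have zP: "z \<in> P" and yz: "y = f z" by auto
        have "y \<in> orb f z" using yz funpow_in_orb[where f=f and n=1 and x=z] by simp
        then have "orb f y = orb f z" using orb_eq[OF pf zP] by blast
        moreover have "orb f y = orb f p" using orb_eq[OF pf p step.IH] .
        ultimately show ?thesis using self_in_orb[of z f] by simp
      qed
    qed
  qed
  show "orb f p \<subseteq> (?G \<union> ?G\<inverse>)\<^sup>* `` {p}"
  proof
    fix y assume "y \<in> orb f p"
    then obtain n where y: "y = (f ^^ n) p" by (auto elim: orbE)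
    have "(p, (f ^^ n) p) \<in> (?G \<union> ?G\<inverse>)\<^sup>*" for n
    proof (induction n)
      case 0 then show ?case by simp
    next
      case (Suc n)
      have "((f ^^ n) p, (f ^^ Suc n) p) \<in> ?G" using funpow_in[OF im p, of n] by auto
      then show ?case using Suc by (meson UnI1 rtrancl.rtrancl_into_rtrancl)
    qed
    then show "y \<in> (?G \<union> ?G\<inverse>)\<^sup>* `` {p}" using y by simp
  qed
qed

definition Psi :: "('d \<Rightarrow> 'd) \<Rightarrow> ('d \<Rightarrow> 'd) \<Rightarrow> 'd set set \<Rightarrow> 'd \<times> bool \<Rightarrow> 'd \<times> bool" where
  "Psi \<sigma> \<alpha> F p = (if snd p then (\<sigma> (fst p), False) else (alF \<alpha> F (fst p), True))"

definition Fs :: "'d set set \<Rightarrow> ('d set \<Rightarrow> bool) \<Rightarrow> 'd set set \<Rightarrow> 'd set set" where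
  "Fs E pos S = {e \<in> E. pos e = (e \<in> S)}"

context RG begin

lemma md: "e \<in> EE \<Longrightarrow> med_dart e \<in> e \<and> e = {med_dart e, \<alpha> (med_dart e)}"
proof -
  assume e: "e \<in> EE"
  have ne: "\<exists>h. h \<in> e" using e unfolding rg_edges_def by auto
  have "med_dart e \<in> e" unfolding med_dart_def using someI_ex[OF ne] .
  moreover have "e = {med_dart e, \<alpha> (med_dart e)}" using in_edge[OF e \<open>med_dart e \<in> e\<close>] .
  ultimately show ?thesis by simp
qed

lemma port_vals:
  "med_port \<alpha> pos e 0 = (if pos e then (med_dart e, True) else (\<alpha> (med_dart e), False))"
  "med_port \<alpha> pos e 1 = (if pos e then (med_dart e, False) else (med_dart e, True))"
  "med_port \<alpha> pos e 2 = (if pos e then (\<alpha> (med_dart e), True) else (med_dart e, False))"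
  "med_port \<alpha> pos e 3 = (if pos e then (\<alpha> (med_dart e), False) else (\<alpha> (med_dart e), True))"
  by (simp_all add: med_port_def Let_def numeral_eq_Suc)

lemma port_val1: "med_port \<alpha> pos e (Suc 0) = (if pos e then (med_dart e, False) else (med_dart e, True))"
  using port_vals(2) by simp

lemma ports: "diag_ports EE (med_port \<alpha> pos) = D \<times> UNIV"
proof -
  have "med_port \<alpha> pos e ` {0..3} = {(med_dart e, True), (med_dart e, False), (\<alpha> (med_dart e), True), (\<alpha> (med_dart e), False)}"
    for e
  proof -
    have "{0..3::nat} = {0, 1, 2, 3}" by auto
    then show ?thesis by (cases "pos e") (simp_all add: port_vals port_val1 insert_commute)
  qed
  moreover have "e \<times> UNIV = {(med_dart e, True), (med_dart e, False), (\<alpha> (med_dart e), True), (\<alpha> (med_dart e), False)}"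
    if "e \<in> EE" for e
  proof -
    have e: "e = {med_dart e, \<alpha> (med_dart e)}" using md[OF that] by simp
    show ?thesis by (subst e) (auto simp: UNIV_bool)
  qed
  ultimately have "diag_ports EE (med_port \<alpha> pos) = (\<Union>e\<in>EE. e \<times> UNIV)"
    unfolding diag_ports_def by (intro SUP_cong refl) simp
  also have "\<dots> = D \<times> UNIV"
  proof
    show "(\<Union>e\<in>EE. e \<times> UNIV) \<subseteq> D \<times> UNIV" using EE_sub by blast
    show "D \<times> UNIV \<subseteq> (\<Union>e\<in>EE. e \<times> UNIV)" using edge_in_EE by blast
  qed
  finally show ?thesis .
qed

end

context RG begin

lemma siinv:
  assumes "h \<in> D"
  shows "the_inv_into D \<sigma> h \<in> D" "\<sigma> (the_inv_into D \<sigma> h) = h" "the_inv_into D \<sigma> (\<sigma> h) = h"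
proof -
  have bij: "bij_betw \<sigma> D D" using rg unfolding ribbon_graph_def by auto
  show "the_inv_into D \<sigma> h \<in> D" using the_inv_into_into[OF siinj] assms sisurj by blast
  show "\<sigma> (the_inv_into D \<sigma> h) = h" using f_the_inv_into_f[OF siinj] assms sisurj by blast
  show "the_inv_into D \<sigma> (\<sigma> h) = h" using the_inv_into_f_f[OF siinj assms] .
qed

lemma perm_Psi: "permA (D \<times> UNIV) (Psi \<sigma> \<alpha> F)"
proof -
  have fin: "finite (D \<times> (UNIV :: bool set))" using finD by simp
  have im: "Psi \<sigma> \<alpha> F ` (D \<times> UNIV) \<subseteq> D \<times> UNIV" using siD alF_D by (auto simp: Psi_def)
  have inj: "inj_on (Psi \<sigma> \<alpha> F) (D \<times> UNIV)"
  proof (rule inj_onI)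
    fix p q assume p: "p \<in> D \<times> UNIV" and q: "q \<in> D \<times> UNIV" and e: "Psi \<sigma> \<alpha> F p = Psi \<sigma> \<alpha> F q"
    obtain h b k c where pq: "p = (h, b)" "q = (k, c)" by fastforce
    have hk: "h \<in> D" "k \<in> D" using p q pq by auto
    show "p = q"
    proof (cases b)
      case True
      then have c: "c" using e pq by (cases c) (auto simp: Psi_def)
      then have "\<sigma> h = \<sigma> k" using e pq True by (simp add: Psi_def)
      then have "h = k" using inj_onD[OF siinj] hk by blast
      then show ?thesis using pq True c by simp
    next
      case False
      then have c: "\<not> c" using e pq by (cases c) (auto simp: Psi_def)
      then have "alF \<alpha> F h = alF \<alpha> F k" using e pq False by (simp add: Psi_def)
      then have "alF \<alpha> F (alF \<alpha> F h) = alF \<alpha> F (alF \<alpha> F k)" by simp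
      then have "h = k" using alF_alF hk by simp
      then show ?thesis using pq False c by simp
    qed
  qed
  show ?thesis unfolding permA_def using fin im inj by auto
qed

lemma smooth_edge:
  fixes pos :: "'d set \<Rightarrow> bool" and Sst :: "'d set set"
  assumes e: "e \<in> EE" and Sst: "Sst \<subseteq> EE"
  defines "F \<equiv> Fs EE pos Sst"
  defines "SPe \<equiv> (if e \<in> Sst then {(med_port \<alpha> pos e 1, med_port \<alpha> pos e 2), (med_port \<alpha> pos e 3, med_port \<alpha> pos e 0)}
                 else {(med_port \<alpha> pos e 0, med_port \<alpha> pos e 1), (med_port \<alpha> pos e 2, med_port \<alpha> pos e 3)})"
  defines "GFe \<equiv> {((g, False), (alF \<alpha> F g, True)) | g. g \<in> e}"
  shows "SPe \<union> SPe\<inverse> = GFe \<union> GFe\<inverse>"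
proof -
  define m where "m = med_dart e"
  have em: "e = {m, \<alpha> m}" "m \<in> D" using md[OF e] EE_sub[OF e] unfolding m_def by auto
  have mm: "\<alpha> (\<alpha> m) = m" using alal em by auto
  have eF: "e \<in> F \<longleftrightarrow> pos e = (e \<in> Sst)" unfolding F_def Fs_def using e by auto
  have a1: "alF \<alpha> F m = (if e \<in> F then \<alpha> m else m)" unfolding alF_def using em by simp
  have a2: "alF \<alpha> F (\<alpha> m) = (if e \<in> F then m else \<alpha> m)" unfolding alF_def using em mm
    by (simp add: insert_commute)
  have G: "GFe = {((m, False), (alF \<alpha> F m, True)), ((\<alpha> m, False), (alF \<alpha> F (\<alpha> m), True))}"
    unfolding GFe_def using em by auto
  show ?thesis
    unfolding SPe_def G a1 a2 port_vals m_def[symmetric] using eF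
    by (cases "pos e"; cases "e \<in> Sst") auto
qed

end

context RG begin

lemma state_eq:
  fixes pos :: "'d set \<Rightarrow> bool" and Sst :: "'d set set"
  assumes Sst: "Sst \<subseteq> EE"
  shows "state_components EE (med_port \<alpha> pos) (med_arc D \<sigma>) L Sst
           = card (orb (psi \<sigma> \<alpha> (Fs EE pos Sst)) ` D) + L"
proof -
  define F where "F = Fs EE pos Sst"
  define P where "P = D \<times> (UNIV :: bool set)"
  define port where "port = med_port \<alpha> pos"
  define nxt where "nxt = med_arc D \<sigma>"
  define \<Psi> where "\<Psi> = Psi \<sigma> \<alpha> F"
  define G where "G = {(q, \<Psi> q) | q. q \<in> P}"
  define GT where "GT = {((h, True), (\<sigma> h, False)) | h. h \<in> D}"
  define GF where "GF = {((g, False), (alF \<alpha> F g, True)) | g. g \<in> D}"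
  define A1 where "A1 = {(p, nxt p) | p. p \<in> P}"
  define SP where "SP = smooth_pairs EE port Sst"
  define SPe where "SPe e = (if e \<in> Sst then {(port e 1, port e 2), (port e 3, port e 0)}
                 else {(port e 0, port e 1), (port e 2, port e 3)})" for e
  define GFe where "GFe e = {((g, False), (alF \<alpha> F g, True)) | g. g \<in> e}" for e
  have GG: "G = GT \<union> GF"
  proof
    show "G \<subseteq> GT \<union> GF"
    proof
      fix x assume "x \<in> G"
      then obtain h b where x: "h \<in> D" "x = ((h, b), \<Psi> (h, b))" unfolding G_def P_def by auto
      then show "x \<in> GT \<union> GF" unfolding GT_def GF_def \<Psi>_def Psi_def by (cases b) auto
    qed
    show "GT \<union> GF \<subseteq> G" unfolding GT_def GF_def G_def P_def \<Psi>_def Psi_def by force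
  qed
  have AA: "A1 = GT \<union> GT\<inverse>"
  proof
    show "A1 \<subseteq> GT \<union> GT\<inverse>"
    proof
      fix x assume "x \<in> A1"
      then obtain h b where x: "h \<in> D" "x = ((h, b), nxt (h, b))" unfolding A1_def P_def by auto
      show "x \<in> GT \<union> GT\<inverse>"
      proof (cases b)
        case True then show ?thesis using x unfolding GT_def nxt_def med_arc_def by auto
      next
        case False
        then have "x = ((\<sigma> (the_inv_into D \<sigma> h), False), (the_inv_into D \<sigma> h, True))"
          using x siinv[OF x(1)] unfolding nxt_def med_arc_def by simp
        then show ?thesis using siinv[OF x(1)] unfolding GT_def by auto
      qed
    qed
    show "GT \<union> GT\<inverse> \<subseteq> A1"
    proof
      fix x assume "x \<in> GT \<union> GT\<inverse>"
      then obtain h where h: "h \<in> D" "x = ((h, True), (\<sigma> h, False)) \<or> x = ((\<sigma> h, False), (h, True))"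
        unfolding GT_def by auto
      have "((h, True), (\<sigma> h, False)) \<in> A1" using h unfolding A1_def P_def nxt_def med_arc_def by auto
      moreover have "((\<sigma> h, False), (h, True)) = ((\<sigma> h, False), nxt (\<sigma> h, False))"
        using siinv[OF h(1)] unfolding nxt_def med_arc_def by simp
      then have "((\<sigma> h, False), (h, True)) \<in> A1" using siD[OF h(1)] unfolding A1_def P_def by auto
      ultimately show "x \<in> A1" using h by auto
    qed
  qed
  have SPU: "SP = (\<Union>e\<in>EE. SPe e)" unfolding SP_def smooth_pairs_def SPe_def by simp
  have GFU: "GF = (\<Union>e\<in>EE. GFe e)"
  proof
    show "GF \<subseteq> (\<Union>e\<in>EE. GFe e)" unfolding GF_def GFe_def using edge_in_EE by blast
    show "(\<Union>e\<in>EE. GFe e) \<subseteq> GF" unfolding GF_def GFe_def using EE_sub by blast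
  qed
  have edge: "SPe e \<union> (SPe e)\<inverse> = GFe e \<union> (GFe e)\<inverse>" if "e \<in> EE" for e
    using smooth_edge[OF that Sst, of pos] unfolding SPe_def GFe_def F_def port_def by simp
  have SS: "SP \<union> SP\<inverse> = GF \<union> GF\<inverse>"
  proof -
    have "SP \<union> SP\<inverse> = (\<Union>e\<in>EE. SPe e \<union> (SPe e)\<inverse>)" unfolding SPU by auto
    also have "\<dots> = (\<Union>e\<in>EE. GFe e \<union> (GFe e)\<inverse>)" using edge by auto
    also have "\<dots> = GF \<union> GF\<inverse>" unfolding GFU by auto
    finally show ?thesis .
  qed
  define R where "R = A1 \<union> SP"
  have RR: "R \<union> R\<inverse> = G \<union> G\<inverse>"
  proof -
    have "R \<union> R\<inverse> = (A1 \<union> A1\<inverse>) \<union> (SP \<union> SP\<inverse>)" unfolding R_def by auto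
    also have "\<dots> = (GT \<union> GT\<inverse>) \<union> (GF \<union> GF\<inverse>)" unfolding SS AA by auto
    also have "\<dots> = G \<union> G\<inverse>" unfolding GG by auto
    finally show ?thesis .
  qed
  have pP: "permA P \<Psi>" unfolding P_def \<Psi>_def by (rule perm_Psi)
  have quot: "P // (R \<union> R\<inverse>)\<^sup>* = orb \<Psi> ` P"
    unfolding quotient_image RR G_def using rtrancl_orb[OF pP] by (intro image_cong) auto
  have sc: "state_components EE port nxt L Sst = card (P // (R \<union> R\<inverse>)\<^sup>*) + L"
    unfolding state_components_def Let_def R_def A1_def SP_def P_def ports[of pos, folded port_def] by simp
  define B where "B = D \<times> {True}"
  have BP: "B \<subseteq> P" unfolding B_def P_def by auto
  have c1: "orb \<Psi> ` P = orb \<Psi> ` B"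
  proof
    show "orb \<Psi> ` B \<subseteq> orb \<Psi> ` P" using BP by auto
    show "orb \<Psi> ` P \<subseteq> orb \<Psi> ` B"
    proof
      fix Z assume "Z \<in> orb \<Psi> ` P"
      then obtain h b where hb: "h \<in> D" "Z = orb \<Psi> (h, b)" unfolding P_def by auto
      show "Z \<in> orb \<Psi> ` B"
      proof (cases b)
        case True then show ?thesis using hb unfolding B_def by auto
      next
        case False
        have "\<Psi> (h, b) \<in> orb \<Psi> (h, b)" using funpow_in_orb[where f=\<Psi> and n=1 and x="(h,b)"] by simp
        then have "orb \<Psi> (\<Psi> (h, b)) = Z" using orb_eq[OF pP, of "(h, b)"] hb unfolding P_def by auto
        moreover have "\<Psi> (h, b) \<in> B" using False hb alF_D unfolding \<Psi>_def Psi_def B_def by auto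
        ultimately show ?thesis by blast
      qed
    qed
  qed
  define g2 where "g2 x = (psi \<sigma> \<alpha> F (fst x), True)" for x :: "'d \<times> bool"
  have g2B: "g2 ` B \<subseteq> B" unfolding g2_def B_def using psi_D by auto
  have FR: "orb g2 x = orb \<Psi> x \<inter> B" if x: "x \<in> B" for x
  proof (rule first_return[OF g2B _ x])
    fix y assume y: "y \<in> B"
    then obtain h where h: "y = (h, True)" "h \<in> D" unfolding B_def by auto
    have "g2 y = (\<Psi> ^^ 2) y" using h unfolding g2_def \<Psi>_def Psi_def psi_def by (simp add: numeral_2_eq_2)
    moreover have "(\<Psi> ^^ 1) y \<notin> B" using h unfolding \<Psi>_def Psi_def B_def by simp
    ultimately show "\<exists>n>0. g2 y = (\<Psi> ^^ n) y \<and> (\<forall>i. 0 < i \<and> i < n \<longrightarrow> (\<Psi> ^^ i) y \<notin> B)"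
      by (intro exI[of _ 2]) (auto simp: less_2_cases_iff)
  qed
  have g2pow: "(g2 ^^ n) (h, True) = ((psi \<sigma> \<alpha> F ^^ n) h, True)" for n h
    by (induction n) (auto simp: g2_def)
  have g2orb: "orb g2 (h, True) = (\<lambda>k. (k, True)) ` orb (psi \<sigma> \<alpha> F) h" for h
    unfolding orb_def using g2pow by auto
  have "card (orb \<Psi> ` B) = card ((\<lambda>x. orb \<Psi> x \<inter> B) ` B)"
    using card_orb_restrict[OF pP BP] by simp
  also have "(\<lambda>x. orb \<Psi> x \<inter> B) ` B = (\<lambda>h. (\<lambda>k. (k, True)) ` orb (psi \<sigma> \<alpha> F) h) ` D"
  proof -
    have "(\<lambda>x. orb \<Psi> x \<inter> B) ` B = orb g2 ` B" using FR by (intro image_cong) auto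
    also have "\<dots> = (\<lambda>h. orb g2 (h, True)) ` D" unfolding B_def by auto
    finally show ?thesis using g2orb by simp
  qed
  also have "card \<dots> = card (orb (psi \<sigma> \<alpha> F) ` D)"
    by (rule card_image_sets[where C = UNIV]) (auto simp: inj_on_def)
  finally have "card (orb \<Psi> ` P) = card (orb (psi \<sigma> \<alpha> F) ` D)" using c1 by simp
  then show ?thesis using sc quot unfolding port_def nxt_def F_def by simp
qed

end

lemma sym_Rel: "sym {(u, w). \<exists>e\<in>F. u \<in> ends e \<and> w \<in> ends e}"
  unfolding sym_def by auto

lemma equiv_cls:
  assumes "sym R" "(x, y) \<in> R\<^sup>*"
  shows "R\<^sup>* `` {y} = R\<^sup>* `` {x}"
proof -
  have s: "sym (R\<^sup>*)" using sym_rtrancl[OF assms(1)] .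
  have "(y, x) \<in> R\<^sup>*" using s assms(2) unfolding sym_def by blast
  then show ?thesis using assms(2) by (auto intro: rtrancl_trans)
qed

lemma rtrancl_add_pair:
  assumes symR: "sym R"
  shows "(v, w) \<in> (R \<union> {a, b} \<times> {a, b})\<^sup>* \<longleftrightarrow>
         (v, w) \<in> R\<^sup>* \<or> (((v, a) \<in> R\<^sup>* \<or> (v, b) \<in> R\<^sup>*) \<and> ((a, w) \<in> R\<^sup>* \<or> (b, w) \<in> R\<^sup>*))"
proof
  let ?R' = "R \<union> {a, b} \<times> {a, b}"
  assume "(v, w) \<in> ?R'\<^sup>*"
  then show "(v, w) \<in> R\<^sup>* \<or> (((v, a) \<in> R\<^sup>* \<or> (v, b) \<in> R\<^sup>*) \<and> ((a, w) \<in> R\<^sup>* \<or> (b, w) \<in> R\<^sup>*))"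
  proof (induction rule: rtrancl_induct)
    case base then show ?case by simp
  next
    case (step y z)
    from step.hyps(2) show ?case
    proof
      assume yz: "(y, z) \<in> R"
      have 1: "(v, y) \<in> R\<^sup>* \<Longrightarrow> (v, z) \<in> R\<^sup>*" using yz by (meson rtrancl.rtrancl_into_rtrancl)
      have 2: "(a, y) \<in> R\<^sup>* \<Longrightarrow> (a, z) \<in> R\<^sup>*" using yz by (meson rtrancl.rtrancl_into_rtrancl)
      have 3: "(b, y) \<in> R\<^sup>* \<Longrightarrow> (b, z) \<in> R\<^sup>*" using yz by (meson rtrancl.rtrancl_into_rtrancl)
      show ?thesis using step.IH 1 2 3 by blast
    next
      assume yz: "(y, z) \<in> {a, b} \<times> {a, b}"
      then have zz: "(a, z) \<in> R\<^sup>* \<or> (b, z) \<in> R\<^sup>*" by auto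
      have yy: "y = a \<or> y = b" using yz by auto
      show ?thesis using step.IH zz yy by blast
    qed
  qed
next
  let ?R' = "R \<union> {a, b} \<times> {a, b}"
  have mono: "R\<^sup>* \<subseteq> ?R'\<^sup>*" by (rule rtrancl_mono) auto
  have t: "(x, y) \<in> ?R'" if "x \<in> {a, b}" "y \<in> {a, b}" for x y using that by auto
  assume H: "(v, w) \<in> R\<^sup>* \<or> (((v, a) \<in> R\<^sup>* \<or> (v, b) \<in> R\<^sup>*) \<and> ((a, w) \<in> R\<^sup>* \<or> (b, w) \<in> R\<^sup>*))"
  from H show "(v, w) \<in> ?R'\<^sup>*"
  proof
    assume "(v, w) \<in> R\<^sup>*" then show ?thesis using mono by blast
  next
    assume H2: "((v, a) \<in> R\<^sup>* \<or> (v, b) \<in> R\<^sup>*) \<and> ((a, w) \<in> R\<^sup>* \<or> (b, w) \<in> R\<^sup>*)"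
    then obtain x y where xy: "x \<in> {a, b}" "y \<in> {a, b}" "(v, x) \<in> R\<^sup>*" "(y, w) \<in> R\<^sup>*" by blast
    have "(v, x) \<in> ?R'\<^sup>*" "(y, w) \<in> ?R'\<^sup>*" using xy mono by blast+
    moreover have "(x, y) \<in> ?R'\<^sup>*" using t[OF xy(1,2)] by blast
    ultimately show ?thesis by (meson rtrancl_trans)
  qed
qed

lemma components_add:
  assumes fin: "finite V" and symR: "sym R" and ab: "a \<in> V" "b \<in> V"
  shows "(a, b) \<in> R\<^sup>* \<Longrightarrow> card (V // (R \<union> {a, b} \<times> {a, b})\<^sup>*) = card (V // R\<^sup>*)"
    and "(a, b) \<notin> R\<^sup>* \<Longrightarrow> card (V // (R \<union> {a, b} \<times> {a, b})\<^sup>*) + 1 = card (V // R\<^sup>*)"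
proof -
  let ?R' = "R \<union> {a, b} \<times> {a, b}"
  have s: "sym (R\<^sup>*)" using sym_rtrancl[OF symR] .
  have symI: "(x, y) \<in> R\<^sup>* \<Longrightarrow> (y, x) \<in> R\<^sup>*" for x y using s unfolding sym_def by blast
  {
    assume r: "(a, b) \<in> R\<^sup>*"
    have "?R'\<^sup>* = R\<^sup>*"
    proof (rule rtrancl_subset)
      show "R \<subseteq> ?R'" by auto
      show "?R' \<subseteq> R\<^sup>*" using r symI[OF r] by auto
    qed
    then show "card (V // ?R'\<^sup>*) = card (V // R\<^sup>*)" by simp
  }
  assume nr: "(a, b) \<notin> R\<^sup>*"
  define cls where "cls v = R\<^sup>* `` {v}" for v
  define cls' where "cls' v = ?R'\<^sup>* `` {v}" for v
  have "card (cls' ` V) + 1 = card (cls ` V)"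
  proof (rule merge_card[where a = a and b = b])
    show "finite V" by (rule fin)
    show "x \<in> cls x" for x unfolding cls_def by simp
    show "cls y = cls x" if "y \<in> cls x" for x y using equiv_cls[OF symR] that unfolding cls_def by simp
    show "a \<in> V" "b \<in> V" by (rule ab)+
    show "cls a \<noteq> cls b"
    proof
      assume "cls a = cls b"
      then have "b \<in> cls a" unfolding cls_def by auto
      then show False using nr unfolding cls_def by simp
    qed
    show "cls' x = cls x" if "x \<in> V" "x \<notin> cls a \<union> cls b" for x
    proof -
      have "(x, a) \<notin> R\<^sup>*" "(x, b) \<notin> R\<^sup>*" using that symI unfolding cls_def by auto
      then show ?thesis unfolding cls_def cls'_def using rtrancl_add_pair[OF symR] by auto
    qed
    show "cls' x = cls a \<union> cls b" if "x \<in> V" "x \<in> cls a \<union> cls b" for x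
    proof
      have xa: "(x, a) \<in> R\<^sup>* \<or> (x, b) \<in> R\<^sup>*" using that symI unfolding cls_def by auto
      have ax: "(a, x) \<in> R\<^sup>* \<or> (b, x) \<in> R\<^sup>*" using that unfolding cls_def by auto
      show "cls' x \<subseteq> cls a \<union> cls b"
      proof
        fix w assume "w \<in> cls' x"
        then have "(x, w) \<in> ?R'\<^sup>*" unfolding cls'_def by simp
        then have "(x, w) \<in> R\<^sup>* \<or> ((a, w) \<in> R\<^sup>* \<or> (b, w) \<in> R\<^sup>*)"
          using rtrancl_add_pair[OF symR] by blast
        then have "(a, w) \<in> R\<^sup>* \<or> (b, w) \<in> R\<^sup>*" using ax by (meson rtrancl_trans)
        then show "w \<in> cls a \<union> cls b" unfolding cls_def by simp
      qed
      show "cls a \<union> cls b \<subseteq> cls' x"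
      proof
        fix w assume "w \<in> cls a \<union> cls b"
        then have "(a, w) \<in> R\<^sup>* \<or> (b, w) \<in> R\<^sup>*" unfolding cls_def by simp
        then have "(x, w) \<in> ?R'\<^sup>*" using rtrancl_add_pair[OF symR, of x w a b] xa by blast
        then show "w \<in> cls' x" unfolding cls'_def by simp
      qed
    qed
  qed
  then show "card (V // ?R'\<^sup>*) + 1 = card (V // R\<^sup>*)"
    unfolding quotient_image cls_def cls'_def .
qed

context RG begin

abbreviation RelF :: "'d set set \<Rightarrow> ('v \<times> 'v) set" where
  "RelF F \<equiv> {(u, w). \<exists>e\<in>F. u \<in> vert ` e \<and> w \<in> vert ` e}"

lemma k_def': "rg_k V vert F = card (V // (RelF F)\<^sup>*)"
  unfolding rg_k_def gr_components_def by simp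

lemma k_empty: "rg_k V vert {} = card V"
proof -
  have "V // (RelF {})\<^sup>* = (\<lambda>x. {x}) ` V" unfolding quotient_image by simp
  then show ?thesis unfolding k_def' by (simp add: card_image)
qed

lemma k_le: "rg_k V vert F \<le> card V"
  unfolding k_def' quotient_image using card_image_le[OF finV] by blast

lemma finEE: "finite EE" unfolding rg_edges_def using finD by simp

lemma k_step:
  assumes h: "h \<in> D"
  shows "(vert h, vert (\<alpha> h)) \<in> (RelF F)\<^sup>* \<Longrightarrow> rg_k V vert (insert {h, \<alpha> h} F) = rg_k V vert F"
    and "(vert h, vert (\<alpha> h)) \<notin> (RelF F)\<^sup>* \<Longrightarrow> rg_k V vert (insert {h, \<alpha> h} F) + 1 = rg_k V vert F"
proof -
  have RI: "RelF (insert {h, \<alpha> h} F) = RelF F \<union> {vert h, vert (\<alpha> h)} \<times> {vert h, vert (\<alpha> h)}" by auto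
  have ab: "vert h \<in> V" "vert (\<alpha> h) \<in> V" using vertD alD h by auto
  note ca = components_add[OF finV sym_Rel[of F "\<lambda>e. vert ` e"] ab]
  show "(vert h, vert (\<alpha> h)) \<in> (RelF F)\<^sup>* \<Longrightarrow> rg_k V vert (insert {h, \<alpha> h} F) = rg_k V vert F"
    unfolding k_def' RI using ca(1) by simp
  show "(vert h, vert (\<alpha> h)) \<notin> (RelF F)\<^sup>* \<Longrightarrow> rg_k V vert (insert {h, \<alpha> h} F) + 1 = rg_k V vert F"
    unfolding k_def' RI using ca(2) by simp
qed

lemma psi_vert:
  assumes F: "F \<subseteq> EE" and x: "x \<in> D"
  shows "(vert x, vert (psi \<sigma> \<alpha> F x)) \<in> (RelF F)\<^sup>*"
proof (cases "{\<sigma> x, \<alpha> (\<sigma> x)} \<in> F")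
  case True
  then have "(vert (\<sigma> x), vert (\<alpha> (\<sigma> x))) \<in> RelF F" by blast
  then show ?thesis using True vsi[OF x] unfolding psi_def alF_def by auto
next
  case False then show ?thesis using vsi[OF x] unfolding psi_def alF_def by auto
qed

lemma psi_pow_vert:
  assumes F: "F \<subseteq> EE" and x: "x \<in> D"
  shows "(vert x, vert ((psi \<sigma> \<alpha> F ^^ n) x)) \<in> (RelF F)\<^sup>*"
proof (induction n)
  case 0 then show ?case by simp
next
  case (Suc n)
  have "(psi \<sigma> \<alpha> F ^^ n) x \<in> D" using funpow_in[of "psi \<sigma> \<alpha> F" D x n] psi_D x by blast
  then show ?case using Suc psi_vert[OF F] by (simp, meson rtrancl_trans)
qed

lemma psi_insert:
  assumes F: "F \<subseteq> EE" and h: "h \<in> D" and eF: "{h, \<alpha> h} \<notin> F"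
    and a0: "a0 \<in> D" "\<sigma> a0 = h" and b0: "b0 \<in> D" "\<sigma> b0 = \<alpha> h" and x: "x \<in> D"
  shows "psi \<sigma> \<alpha> (insert {h, \<alpha> h} F) x = swp (psi \<sigma> \<alpha> F) a0 b0 x"
proof -
  have ah: "\<alpha> (\<alpha> h) = h" using alal h by simp
  have e2: "{\<alpha> h, \<alpha> (\<alpha> h)} = {h, \<alpha> h}" using ah by auto
  have ab: "a0 \<noteq> b0" using a0 b0 alne[OF h] by auto
  show ?thesis
  proof (cases "x = a0")
    case True
    then show ?thesis using a0 b0 eF e2 unfolding psi_def alF_def swp_def by simp
  next
    case False
    show ?thesis
    proof (cases "x = b0")
      case True
      then show ?thesis using a0 b0 eF e2 ah False unfolding psi_def alF_def swp_def by simp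
    next
      case False2: False
      have "\<sigma> x \<noteq> h" using False a0 x inj_onD[OF siinj] by metis
      moreover have "\<sigma> x \<noteq> \<alpha> h" using False2 b0 x inj_onD[OF siinj] by metis
      ultimately have "{\<sigma> x, \<alpha> (\<sigma> x)} \<noteq> {h, \<alpha> h}" by auto
      then show ?thesis using False False2 unfolding psi_def alF_def swp_def by simp
    qed
  qed
qed

lemma cyc_step:
  assumes F: "F \<subseteq> EE" and h: "h \<in> D" and eF: "{h, \<alpha> h} \<notin> F"
  shows "(vert h, vert (\<alpha> h)) \<notin> (RelF F)\<^sup>* \<Longrightarrow>
           card (orb (psi \<sigma> \<alpha> (insert {h, \<alpha> h} F)) ` D) + 1 = card (orb (psi \<sigma> \<alpha> F) ` D)"
    and "card (orb (psi \<sigma> \<alpha> (insert {h, \<alpha> h} F)) ` D) = card (orb (psi \<sigma> \<alpha> F) ` D) + 1 \<or>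
         card (orb (psi \<sigma> \<alpha> (insert {h, \<alpha> h} F)) ` D) + 1 = card (orb (psi \<sigma> \<alpha> F) ` D)"
proof -
  obtain a0 where a0: "a0 \<in> D" "\<sigma> a0 = h" using h sisurj by (metis imageE)
  obtain b0 where b0: "b0 \<in> D" "\<sigma> b0 = \<alpha> h" using alD[OF h] sisurj by (metis imageE)
  have ab: "a0 \<noteq> b0" using a0 b0 alne[OF h] by auto
  let ?f = "psi \<sigma> \<alpha> F"
  let ?f' = "psi \<sigma> \<alpha> (insert {h, \<alpha> h} F)"
  have eqD: "\<And>x. x \<in> D \<Longrightarrow> ?f' x = swp ?f a0 b0 x" using psi_insert[OF F h eF a0 b0] by blast
  have imD: "?f' ` D \<subseteq> D" using psi_D by auto
  have c: "card (orb ?f' ` D) = card (orb (swp ?f a0 b0) ` D)"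
  proof -
    have "orb ?f' ` D = orb (swp ?f a0 b0) ` D"
      using orb_cong[OF eqD imD] by (intro image_cong) auto
    then show ?thesis by simp
  qed
  have pf: "permA D ?f" by (rule perm_psi)
  have link: "b0 \<in> orb ?f a0 \<Longrightarrow> (vert h, vert (\<alpha> h)) \<in> (RelF F)\<^sup>*"
  proof -
    assume "b0 \<in> orb ?f a0"
    then obtain n where "b0 = (?f ^^ n) a0" by (auto elim: orbE)
    then have "(vert a0, vert b0) \<in> (RelF F)\<^sup>*" using psi_pow_vert[OF F a0(1), of n] by simp
    moreover have "vert a0 = vert h" "vert b0 = vert (\<alpha> h)" using vsi a0 b0 by metis+
    ultimately show ?thesis by simp
  qed
  show "(vert h, vert (\<alpha> h)) \<notin> (RelF F)\<^sup>* \<Longrightarrow> card (orb ?f' ` D) + 1 = card (orb ?f ` D)"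
    using transp_diff[OF pf a0(1) b0(1) ab] link c by auto
  show "card (orb ?f' ` D) = card (orb ?f ` D) + 1 \<or> card (orb ?f' ` D) + 1 = card (orb ?f ` D)"
    using transp_diff[OF pf a0(1) b0(1) ab] transp_same[OF pf a0(1) b0(1) ab] c by (cases "b0 \<in> orb ?f a0") auto
qed

definition Xf :: "'d set set \<Rightarrow> int" where
  "Xf F = int (rg_k V vert F) - int (rg_bc V vert \<sigma> \<alpha> F) + int (rg_n V vert F)"

definition Inv :: "'d set set \<Rightarrow> bool" where
  "Inv F \<longleftrightarrow> card V \<le> rg_k V vert F + card F \<and> 0 \<le> Xf F \<and> even (Xf F)"

lemma n_int:
  assumes "card V \<le> rg_k V vert F + card F"
  shows "int (rg_n V vert F) = int (card F) - int (card V) + int (rg_k V vert F)"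
  using assms k_le[of F] unfolding rg_n_def gr_nullity_def gr_rank_def rg_k_def by linarith

lemma r_int: "int (rg_r V vert F) = int (card V) - int (rg_k V vert F)"
  using k_le[of F] unfolding rg_r_def gr_rank_def rg_k_def by linarith

lemma Inv_empty: "Inv {}"
proof -
  have bc: "rg_bc V vert \<sigma> \<alpha> {} = card V" unfolding rg_bc_def by simp
  have n: "int (rg_n V vert {}) = 0" using n_int[of "{}"] k_empty by simp
  show ?thesis unfolding Inv_def Xf_def using bc n k_empty by simp
qed

lemma Inv_step:
  assumes F: "F \<subseteq> EE" "finite F" and e: "e \<in> EE" "e \<notin> F" and I: "Inv F"
  shows "Inv (insert e F) \<and> (Xf (insert e F) = Xf F \<or> Xf (insert e F) = Xf F + 2)"
proof -
  obtain h where h: "h \<in> D" "e = {h, \<alpha> h}" using e unfolding rg_edges_def by auto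
  have eF: "{h, \<alpha> h} \<notin> F" using e h by simp
  have F': "insert e F \<subseteq> EE" using F e by auto
  define k where "k = rg_k V vert F"
  define k' where "k' = rg_k V vert (insert e F)"
  define c where "c = card (orb (psi \<sigma> \<alpha> F) ` D)"
  define c' where "c' = card (orb (psi \<sigma> \<alpha> (insert e F)) ` D)"
  define L where "L = med_loops V D vert"
  have bc: "rg_bc V vert \<sigma> \<alpha> F = c + L" unfolding c_def L_def using bc_eq[OF F(1)] .
  have bc': "rg_bc V vert \<sigma> \<alpha> (insert e F) = c' + L" unfolding c'_def L_def using bc_eq[OF F'] .
  have cardF: "card (insert e F) = card F + 1" using F(2) e(2) by simp
  have I1: "card V \<le> k + card F" and X0: "0 \<le> Xf F" and Xe: "even (Xf F)"
    using I unfolding Inv_def k_def by auto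
  have XF: "Xf F = int k - int (c + L) + (int (card F) - int (card V) + int k)"
    unfolding Xf_def k_def using bc n_int[OF I1[unfolded k_def]] by simp
  show ?thesis
  proof (cases "(vert h, vert (\<alpha> h)) \<in> (RelF F)\<^sup>*")
    case False
    have kk: "k' + 1 = k" unfolding k'_def k_def h(2) using k_step(2)[OF h(1) False] .
    have cc: "c' + 1 = c" unfolding c'_def c_def h(2) using cyc_step(1)[OF F(1) h(1) eF False] .
    have I1': "card V \<le> k' + card (insert e F)" using I1 kk cardF by simp
    have XF': "Xf (insert e F) = int k' - int (c' + L) + (int (card (insert e F)) - int (card V) + int k')"
      unfolding Xf_def k'_def using bc' n_int[OF I1'[unfolded k'_def]] by simp
    have "Xf (insert e F) = Xf F" using XF XF' kk cc cardF by simp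
    then show ?thesis using I1' X0 Xe unfolding Inv_def k'_def by simp
  next
    case True
    have kk: "k' = k" unfolding k'_def k_def h(2) using k_step(1)[OF h(1) True] .
    have cc: "c' = c + 1 \<or> c' + 1 = c" unfolding c'_def c_def h(2) using cyc_step(2)[OF F(1) h(1) eF] .
    have I1': "card V \<le> k' + card (insert e F)" using I1 kk cardF by simp
    have XF': "Xf (insert e F) = int k' - int (c' + L) + (int (card (insert e F)) - int (card V) + int k')"
      unfolding Xf_def k'_def using bc' n_int[OF I1'[unfolded k'_def]] by simp
    have "Xf (insert e F) = Xf F \<or> Xf (insert e F) = Xf F + 2" using XF XF' kk cc cardF by auto
    moreover then have "0 \<le> Xf (insert e F) \<and> even (Xf (insert e F))" using X0 Xe by auto
    ultimately show ?thesis using I1' unfolding Inv_def k'_def by simp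
  qed
qed

lemma Inv_all: "F \<subseteq> EE \<Longrightarrow> Inv F"
proof -
  assume F: "F \<subseteq> EE"
  have "finite F" using F finEE finite_subset by blast
  then show "Inv F" using F
  proof (induction rule: finite_subset_induct')
    case empty then show ?case by (rule Inv_empty)
  next
    case (insert a F) then show ?case using Inv_step by blast
  qed
qed

lemma Xf_mono:
  assumes "F \<subseteq> G" "G \<subseteq> EE"
  shows "Xf F \<le> Xf G"
proof -
  have fin: "finite (G - F)" using assms finEE finite_subset by blast
  have "Xf F \<le> Xf (F \<union> H)" if "finite H" "H \<subseteq> G - F" for H
    using that
  proof (induction rule: finite_subset_induct')
    case empty then show ?case by simp
  next
    case (insert a H)
    have sub1: "F \<union> H \<subseteq> EE" using insert assms by auto
    then have sub: "F \<union> H \<subseteq> EE" "finite (F \<union> H)" using finEE finite_subset by auto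
    have "a \<in> EE" "a \<notin> F \<union> H" using insert assms by auto
    then have "Xf (F \<union> H) \<le> Xf (insert a (F \<union> H))"
      using Inv_step[OF sub] Inv_all[OF sub(1)] by fastforce
    then show ?case using insert by simp
  qed
  from this[OF fin] show ?thesis using assms by (simp add: Un_absorb1 Un_Diff_cancel)
qed

lemma Xf_planar:
  assumes g: "rg_genus V D vert \<sigma> \<alpha> = 0" and F: "F \<subseteq> EE"
  shows "Xf F = 0"
proof -
  have "rg_genus V D vert \<sigma> \<alpha> = Xf EE div 2" unfolding rg_genus_def Xf_def Let_def by simp
  moreover have "0 \<le> Xf EE" "even (Xf EE)" using Inv_all[of EE] unfolding Inv_def by auto
  ultimately have "Xf EE = 0" using g by fastforce
  moreover have "0 \<le> Xf F" using Inv_all[OF F] unfolding Inv_def by auto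
  ultimately show ?thesis using Xf_mono[OF F] by simp
qed

end

lemma exp_ipi_int: "exp (\<i> * complex_of_real pi * complex_of_real (real_of_int m)) = (-1) powi m"
proof (cases "m \<ge> 0")
  case True
  then obtain N where N: "m = int N" by (metis nonneg_eq_int)
  have "exp (\<i> * complex_of_real pi * complex_of_real (real_of_int m)) = exp (of_nat N * (\<i> * complex_of_real pi))"
    using N by (simp add: mult.commute)
  also have "\<dots> = (-1) ^ N" by (simp add: exp_of_nat_mult)
  finally show ?thesis using N by simp
next
  case False
  then obtain N where N: "m = - int N" by (metis nonneg_eq_int neg_0_le_iff_le linear minus_minus)
  have "exp (\<i> * complex_of_real pi * complex_of_real (real_of_int m)) = inverse (exp (of_nat N * (\<i> * complex_of_real pi)))"
    using N by (simp add: mult.commute exp_minus[symmetric])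
  also have "\<dots> = inverse ((-1) ^ N)" by (simp add: exp_of_nat_mult)
  finally show ?thesis using N by (simp add: power_int_minus)
qed

lemma neg_pow:
  fixes t a b :: real and m :: int
  assumes t: "t > 0" and ab: "a + b = real_of_int m"
  shows "complex_of_real (-t-1) powr complex_of_real a * complex_of_real (-1/t-1) powr complex_of_real b
        = complex_of_real ((- (t powr (1/2)) - t powr (-1/2)) powi m * t powr (real_of_int m / 2 - b))"
proof -
  define D where "D = t powr (1/2) + t powr (-1/2)"
  have Dpos: "D > 0" unfolding D_def using t by (simp add: add_pos_pos)
  have tD: "t + 1 = D * t powr (1/2)"
  proof -
    have "t powr (1/2) * t powr (1/2) = t" using t by (simp add: powr_add[symmetric])
    moreover have "t powr (-1/2) * t powr (1/2) = 1" using t by (simp add: powr_add[symmetric])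
    ultimately show ?thesis unfolding D_def by (simp add: distrib_right)
  qed
  have x: "-t-1 < 0" "-1/t-1 < 0" using t by (auto simp: field_simps)
  have e1: "complex_of_real (-t-1) powr complex_of_real a = complex_of_real ((t+1) powr a) * exp (\<i> * pi * a)"
  proof -
    have "\<bar>- t - 1\<bar> = t + 1" using t by simp
    then show ?thesis using powr_of_neg_real[OF x(1), of a] by simp
  qed
  have e2: "complex_of_real (-1/t-1) powr complex_of_real b = complex_of_real ((1/t+1) powr b) * exp (\<i> * pi * b)"
  proof -
    have p: "0 < 1 / t" using t by simp
    have n: "- (1 / t) - 1 < 0" using p by linarith
    have "\<bar>- (1 / t) - 1\<bar> = 1 / t + 1" unfolding abs_of_neg[OF n] by simp
    then show ?thesis using powr_of_neg_real[OF x(2), of b] by simp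
  qed
  have ee: "exp (\<i> * pi * a) * exp (\<i> * pi * b) = (-1) powi m"
  proof -
    have "exp (\<i> * pi * a) * exp (\<i> * pi * b) = exp (\<i> * complex_of_real pi * complex_of_real (a + b))"
      by (simp add: exp_add[symmetric] algebra_simps)
    then show ?thesis using ab exp_ipi_int by simp
  qed
  have r1: "(1/t+1) powr b = (t+1) powr b / t powr b"
  proof -
    have "1/t + 1 = (t+1)/t" using t by (simp add: field_simps)
    then show ?thesis using t by (simp add: powr_divide)
  qed
  have r2: "(t+1) powr a * ((t+1) powr b / t powr b) = (t+1) powr real_of_int m * t powr (-b)"
    using ab t by (simp add: powr_add[symmetric] powr_minus divide_inverse)
  have r3: "(t+1) powr real_of_int m = D powi m * t powr (real_of_int m / 2)"
  proof -
    have "(t+1) powr real_of_int m = D powr real_of_int m * (t powr (1/2)) powr real_of_int m"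
      unfolding tD using Dpos t by (simp add: powr_mult)
    also have "(t powr (1/2)) powr real_of_int m = t powr (real_of_int m / 2)" by (simp add: powr_powr)
    also have "D powr real_of_int m = D powi m" using Dpos by (simp add: powr_real_of_int')
    finally show ?thesis .
  qed
  have r4: "(-1) powi m * D powi m = (- (t powr (1/2)) - t powr (-1/2)) powi m"
    unfolding D_def by (simp add: power_int_mult_distrib[symmetric])
  have "complex_of_real (-t-1) powr complex_of_real a * complex_of_real (-1/t-1) powr complex_of_real b
        = complex_of_real ((t+1) powr a * (1/t+1) powr b) * (exp (\<i> * pi * a) * exp (\<i> * pi * b))"
    unfolding e1 e2 by (simp add: algebra_simps)
  also have "\<dots> = complex_of_real ((t+1) powr a * (1/t+1) powr b) * (-1) powi m" unfolding ee ..
  also have "(t+1) powr a * (1/t+1) powr b = D powi m * t powr (real_of_int m / 2) * t powr (-b)"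
    unfolding r1 r2 r3 ..
  also have "complex_of_real (D powi m * t powr (real_of_int m / 2) * t powr (-b)) * (-1) powi m
     = complex_of_real ((-1) powi m * D powi m * t powr (real_of_int m / 2 - b))"
  proof -
    have q: "t powr (real_of_int m / 2) * t powr (-b) = t powr (real_of_int m / 2 - b)"
      by (simp add: powr_add[symmetric])
    have "complex_of_real (D powi m * t powr (real_of_int m / 2) * t powr (-b)) * (-1) powi m
        = complex_of_real (D powi m * t powr (real_of_int m / 2) * t powr (-b)) * complex_of_real ((-1) powi m)"
      by simp
    also have "\<dots> = complex_of_real ((-1) powi m * (D powi m * (t powr (real_of_int m / 2) * t powr (-b))))"
      by (simp only: of_real_mult[symmetric] mult_ac)
    finally show ?thesis unfolding q by (simp only: mult_ac)
  qed
  also have "\<dots> = complex_of_real ((- (t powr (1/2)) - t powr (-1/2)) powi m * t powr (real_of_int m / 2 - b))"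
    unfolding r4 ..
  finally show ?thesis .
qed

lemma powr_pow_nat: "t > 0 \<Longrightarrow> (t powr c) ^ n = t powr (c * real n)"
  by (simp add: powr_realpow[symmetric] powr_powr)

context RG begin

lemma Fs_sub: "Fs EE pos F \<subseteq> EE" unfolding Fs_def by auto

lemma Fs_Fs: "F \<subseteq> EE \<Longrightarrow> Fs EE pos (Fs EE pos F) = F"
  unfolding Fs_def by auto

lemma Fs_bij: "bij_betw (Fs EE pos) (Pow EE) (Pow EE)"
  by (rule bij_betw_byWitness[where f' = "Fs EE pos"]) (auto simp: Fs_Fs, auto simp: Fs_def)

lemma card_Fs:
  assumes F: "F \<subseteq> EE"
  shows "int (card (Fs EE pos F)) = int (card F) - int (neg_count pos F) + int (neg_count pos (EE - F))"
proof -
  have fin: "finite F" "finite (EE - F)" using F finEE finite_subset by auto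
  have "Fs EE pos F = {e \<in> F. pos e} \<union> {e \<in> EE - F. \<not> pos e}" unfolding Fs_def using F by auto
  moreover have "{e \<in> F. pos e} \<inter> {e \<in> EE - F. \<not> pos e} = {}" by auto
  ultimately have c: "card (Fs EE pos F) = card {e \<in> F. pos e} + card {e \<in> EE - F. \<not> pos e}"
    using fin by (simp add: card_Un_disjoint)
  have "card F = card {e \<in> F. pos e} + card {e \<in> F. \<not> pos e}"
  proof -
    have "F = {e \<in> F. pos e} \<union> {e \<in> F. \<not> pos e}" by auto
    moreover have "{e \<in> F. pos e} \<inter> {e \<in> F. \<not> pos e} = {}" by auto
    ultimately show ?thesis using fin by (metis (no_types, lifting) card_Un_disjoint finite_Un)
  qed
  then show ?thesis using c unfolding neg_count_def by simp
qed

lemma term_eq: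
  fixes t :: real and pos :: "'d set \<Rightarrow> bool"
  assumes t: "t > 0" and F: "F \<subseteq> EE"
  defines "d \<equiv> - (t powr (1/2)) - t powr (-1/2)"
  defines "s \<equiv> (real (neg_count pos F) - real (neg_count pos (EE - F))) / 2"
  shows "complex_of_real (t powr ((- real (rg_r V vert EE) + real (rg_n V vert EE)) / 4)
            * d powi (int (rg_k V vert EE) - 1))
         * (complex_of_real (- t - 1) powr complex_of_real (real (rg_r V vert EE) - real (rg_r V vert F) + s)
            * complex_of_real (- 1 / t - 1) powr complex_of_real (real (rg_n V vert F) - s)
            * complex_of_real (1 / d) ^ nat (int (rg_k V vert F) - int (rg_bc V vert \<sigma> \<alpha> F) + int (rg_n V vert F)))
       = complex_of_real ((t powr (-1/4)) ^ card (Fs EE pos F) * (t powr (1/4)) ^ card (EE - Fs EE pos F)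
            * d powi (int (rg_bc V vert \<sigma> \<alpha> F) - 1))"
proof -
  have "t powr (1/2) > 0" "t powr (-1/2) > 0" using t by auto
  then have dneg: "d < 0" unfolding d_def by linarith
  then have dnz: "d \<noteq> 0" by simp
  have IE: "Inv EE" and IF: "Inv F" using Inv_all F by auto
  define kE where "kE = rg_k V vert EE"
  define kF where "kF = rg_k V vert F"
  define bF where "bF = rg_bc V vert \<sigma> \<alpha> F"
  define cS where "cS = card (Fs EE pos F)"
  have rE: "int (rg_r V vert EE) = int (card V) - int kE" unfolding kE_def by (rule r_int)
  have rF: "int (rg_r V vert F) = int (card V) - int kF" unfolding kF_def by (rule r_int)
  have nE: "int (rg_n V vert EE) = int (card EE) - int (card V) + int kE"
    using n_int IE unfolding Inv_def kE_def by blast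
  have nF: "int (rg_n V vert F) = int (card F) - int (card V) + int kF"
    using n_int IF unfolding Inv_def kF_def by blast
  have X0: "0 \<le> int kF - int bF + int (rg_n V vert F)" using IF unfolding Inv_def Xf_def kF_def bF_def by simp
  have cSv: "int cS = int (card F) - int (neg_count pos F) + int (neg_count pos (EE - F))"
    unfolding cS_def by (rule card_Fs[OF F])
  have cES: "card (EE - Fs EE pos F) = card EE - cS" unfolding cS_def
    using card_Diff_subset[OF finite_subset[OF Fs_sub[where pos=pos and F=F] finEE] Fs_sub[where pos=pos and F=F]] .
  have cSle: "cS \<le> card EE" unfolding cS_def using card_mono[OF finEE Fs_sub[where pos=pos and F=F]] .
  define m where "m = int (rg_r V vert EE) - int (rg_r V vert F) + int (rg_n V vert F)"
  define X where "X = int kF - int bF + int (rg_n V vert F)"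
  have ab: "(real (rg_r V vert EE) - real (rg_r V vert F) + s) + (real (rg_n V vert F) - s) = real_of_int m"
    unfolding m_def by simp
  note np = neg_pow[OF t ab]
  have X0': "0 \<le> X" using X0 unfolding X_def .
  have z0: "d powi (- X) = (1 / d) ^ nat X"
  proof (cases "X = 0")
    case True then show ?thesis by simp
  next
    case False then have "- X < 0" using X0' by simp
    then show ?thesis unfolding power_int_def by (simp add: divide_inverse)
  qed
  have z: "complex_of_real (1 / d) ^ nat X = complex_of_real (d powi (- X))"
    unfolding z0 by simp
  have LHS: "complex_of_real (t powr ((- real (rg_r V vert EE) + real (rg_n V vert EE)) / 4)
            * d powi (int kE - 1))
         * (complex_of_real ((- (t powr (1/2)) - t powr (-1/2)) powi m * t powr (real_of_int m / 2 - (real (rg_n V vert F) - s)))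
            * complex_of_real (d powi (- X)))
       = complex_of_real (t powr ((- real (rg_r V vert EE) + real (rg_n V vert EE)) / 4 + (real_of_int m / 2 - (real (rg_n V vert F) - s)))
            * d powi (int kE - 1 + m + (- X)))"
  proof -
    define P where "P = (- real (rg_r V vert EE) + real (rg_n V vert EE)) / 4"
    define Q where "Q = real_of_int m / 2 - (real (rg_n V vert F) - s)"
    have dd1: "d powi (int kE - 1 + m + (- X)) = d powi (int kE - 1 + m) * d powi (- X)"
      by (rule power_int_add) (use dnz in simp)
    have dd2: "d powi (int kE - 1 + m) = d powi (int kE - 1) * d powi m"
      by (rule power_int_add) (use dnz in simp)
    have dd: "d powi (int kE - 1) * d powi m * d powi (- X) = d powi (int kE - 1 + m + (- X))"
      unfolding dd1 dd2 ..
    have tt: "t powr P * t powr Q = t powr (P + Q)" by (simp add: powr_add)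
    have H: "complex_of_real (t powr P * d powi (int kE - 1)) * (complex_of_real (d powi m * t powr Q) * complex_of_real (d powi (- X)))
        = complex_of_real (t powr (P + Q) * d powi (int kE - 1 + m + (- X)))"
      unfolding of_real_mult[symmetric] dd[symmetric] tt[symmetric] by (simp only: mult_ac)
    show ?thesis using H unfolding P_def Q_def d_def[symmetric] .
  qed
  have e1: "int kE - 1 + m + (- X) = int bF - 1"
    unfolding m_def X_def using rE rF by simp
  have e2: "(- real (rg_r V vert EE) + real (rg_n V vert EE)) / 4 + (real_of_int m / 2 - (real (rg_n V vert F) - s))
            = - 1/4 * real cS + 1/4 * real (card EE - cS)"
  proof -
    have A: "real (rg_r V vert EE) = real (card V) - real kE" using rE by linarith
    have B: "real (rg_r V vert F) = real (card V) - real kF" using rF by linarith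
    have C: "real (rg_n V vert EE) = real (card EE) - real (card V) + real kE" using nE by linarith
    have Dd: "real (rg_n V vert F) = real (card F) - real (card V) + real kF" using nF by linarith
    have Ee: "real cS = real (card F) - real (neg_count pos F) + real (neg_count pos (EE - F))" using cSv by linarith
    have Ff: "real (card EE - cS) = real (card EE) - real cS" using cSle by simp
    have M: "real_of_int m = real (rg_r V vert EE) - real (rg_r V vert F) + real (rg_n V vert F)" unfolding m_def by simp
    show ?thesis unfolding M Ff using A B C Dd Ee unfolding s_def by (simp add: field_simps)
  qed
  have RHS: "(t powr (-1/4)) ^ cS * (t powr (1/4)) ^ (card EE - cS) = t powr (- 1/4 * real cS + 1/4 * real (card EE - cS))"
  proof -
    have 1: "(t powr (-1/4)) ^ cS = t powr (-1/4 * real cS)" by (rule powr_pow_nat[OF t])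
    have 2: "(t powr (1/4)) ^ (card EE - cS) = t powr (1/4 * real (card EE - cS))" using powr_pow_nat[OF t] by (simp add: mult.commute)
    show ?thesis unfolding 1 2 powr_add[symmetric] ..
  qed
  show ?thesis
    unfolding np kE_def[symmetric] kF_def[symmetric] bF_def[symmetric] X_def[symmetric] z
    unfolding d_def[symmetric] LHS[folded d_def] e1 e2 cES cS_def[symmetric] RHS[symmetric] by (simp add: mult_ac)
qed

end

context RG begin

lemma main1:
  fixes pos :: "'d set \<Rightarrow> bool" and ori :: "'d \<times> bool \<Rightarrow> bool" and t :: real
  assumes t: "t > 0"
  shows "complex_of_real (medial_jones V D vert \<sigma> \<alpha> pos ori t) =
           complex_of_real ((-1) powi medial_writhe D \<alpha> pos ori
             * t powr ((3 * real_of_int (medial_writhe D \<alpha> pos ori)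
                        - real (rg_r V vert (rg_edges D \<alpha>)) + real (rg_n V vert (rg_edges D \<alpha>))) / 4)
             * (- (t powr (1/2)) - t powr (-1/2)) powi (int (rg_k V vert (rg_edges D \<alpha>)) - 1))
           * signed_BR V D vert \<sigma> \<alpha> pos (complex_of_real (- t - 1)) (complex_of_real (- 1 / t - 1))
               (complex_of_real (1 / (- (t powr (1/2)) - t powr (-1/2))))"
proof -
  define d where "d = - (t powr (1/2)) - t powr (-1/2)"
  define w where "w = medial_writhe D \<alpha> pos ori"
  define L where "L = med_loops V D vert"
  define port where "port = med_port \<alpha> pos"
  define nxt where "nxt = med_arc D \<sigma>"
  define pref where "pref = t powr ((- real (rg_r V vert EE) + real (rg_n V vert EE)) / 4) * d powi (int (rg_k V vert EE) - 1)"
  define BRt where "BRt F = (let s = (real (neg_count pos F) - real (neg_count pos (EE - F))) / 2 in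
           complex_of_real (- t - 1) powr complex_of_real (real (rg_r V vert EE) - real (rg_r V vert F) + s)
           * complex_of_real (- 1 / t - 1) powr complex_of_real (real (rg_n V vert F) - s)
           * complex_of_real (1 / d) ^ nat (int (rg_k V vert F) - int (rg_bc V vert \<sigma> \<alpha> F) + int (rg_n V vert F)))" for F
  define KBt where "KBt S = (t powr (-1/4)) ^ card S * (t powr (1/4)) ^ card (EE - S)
           * d powi (int (rg_bc V vert \<sigma> \<alpha> (Fs EE pos S)) - 1)" for S
  have BR: "signed_BR V D vert \<sigma> \<alpha> pos (complex_of_real (- t - 1)) (complex_of_real (- 1 / t - 1))
               (complex_of_real (1 / d)) = (\<Sum>F\<in>Pow EE. BRt F)"
    unfolding signed_BR_def BRt_def Let_def by simp
  have KB: "kauffman_bracket EE port nxt L (t powr (-1/4)) (t powr (1/4)) d = (\<Sum>S\<in>Pow EE. KBt S)"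
    unfolding kauffman_bracket_def KBt_def
  proof (rule sum.cong[OF refl])
    fix S assume S: "S \<in> Pow EE"
    have "state_components EE port nxt L S = rg_bc V vert \<sigma> \<alpha> (Fs EE pos S)"
      unfolding port_def nxt_def using state_eq[of S pos L] bc_eq[OF Fs_sub[where pos=pos and F=S]] S
      unfolding L_def by simp
    then show "(t powr (-1/4)) ^ card S * (t powr (1/4)) ^ card (EE - S) * d powi (int (state_components EE port nxt L S) - 1)
       = (t powr (-1/4)) ^ card S * (t powr (1/4)) ^ card (EE - S) * d powi (int (rg_bc V vert \<sigma> \<alpha> (Fs EE pos S)) - 1)"
      by simp
  qed
  have KB2: "(\<Sum>S\<in>Pow EE. KBt S) = (\<Sum>F\<in>Pow EE. KBt (Fs EE pos F))"
    using sum.reindex_bij_betw[OF Fs_bij[where pos=pos], of KBt] by simp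
  have termw: "complex_of_real pref * BRt F = complex_of_real (KBt (Fs EE pos F))" if F: "F \<in> Pow EE" for F
    using term_eq[OF t, of F pos] F Fs_Fs[of F pos] unfolding pref_def BRt_def KBt_def d_def Let_def by simp
  have sumeq: "complex_of_real pref * (\<Sum>F\<in>Pow EE. BRt F) = complex_of_real (\<Sum>S\<in>Pow EE. KBt S)"
    unfolding KB2 sum_distrib_left of_real_sum using termw by (intro sum.cong) auto
  have tsplit: "t powr ((3 * real_of_int w - real (rg_r V vert EE) + real (rg_n V vert EE)) / 4)
      = t powr (3 * real_of_int w / 4) * t powr ((- real (rg_r V vert EE) + real (rg_n V vert EE)) / 4)"
  proof -
    have "(3 * real_of_int w - real (rg_r V vert EE) + real (rg_n V vert EE)) / 4
        = 3 * real_of_int w / 4 + (- real (rg_r V vert EE) + real (rg_n V vert EE)) / 4" by simp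
    then show ?thesis by (simp only: powr_add)
  qed
  have J: "medial_jones V D vert \<sigma> \<alpha> pos ori t = (-1) powi w * t powr (3 * real_of_int w / 4) * (\<Sum>S\<in>Pow EE. KBt S)"
    unfolding medial_jones_def jones_def Let_def KB[symmetric] w_def medial_writhe_def port_def nxt_def L_def d_def
    by simp
  have "complex_of_real ((-1) powi w
             * t powr ((3 * real_of_int w - real (rg_r V vert EE) + real (rg_n V vert EE)) / 4)
             * d powi (int (rg_k V vert EE) - 1))
           * (\<Sum>F\<in>Pow EE. BRt F)
        = complex_of_real ((-1) powi w * t powr (3 * real_of_int w / 4)) * (complex_of_real pref * (\<Sum>F\<in>Pow EE. BRt F))"
    unfolding tsplit pref_def of_real_mult by (simp only: mult_ac)
  also have "\<dots> = complex_of_real (medial_jones V D vert \<sigma> \<alpha> pos ori t)"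
    unfolding sumeq J of_real_mult ..
  finally show ?thesis unfolding BR[symmetric] w_def d_def by simp
qed

end

context RG begin

lemma k_anti:
  assumes "F \<subseteq> G" "G \<subseteq> EE"
  shows "rg_k V vert G \<le> rg_k V vert F"
proof -
  have fin: "finite (G - F)" using assms finEE finite_subset by blast
  have "rg_k V vert (F \<union> H) \<le> rg_k V vert F" if "finite H" "H \<subseteq> G - F" for H
    using that
  proof (induction rule: finite_subset_induct')
    case empty then show ?case by simp
  next
    case (insert a H)
    have "a \<in> EE" using insert assms by auto
    then obtain h where h: "h \<in> D" "a = {h, \<alpha> h}" unfolding rg_edges_def by auto
    have "rg_k V vert (insert a (F \<union> H)) \<le> rg_k V vert (F \<union> H)"
      using k_step[OF h(1), of "F \<union> H"] h(2) by (cases "(vert h, vert (\<alpha> h)) \<in> (RelF (F \<union> H))\<^sup>*") auto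
    then show ?case using insert by simp
  qed
  from this[OF fin] show ?thesis using assms by (simp add: Un_absorb1 Un_Diff_cancel)
qed

lemma main2:
  fixes pos :: "'d set \<Rightarrow> bool" and t :: real
  assumes t: "t > 0" and g: "rg_genus V D vert \<sigma> \<alpha> = 0" and p: "\<forall>e\<in>EE. pos e"
  shows "signed_BR V D vert \<sigma> \<alpha> pos (complex_of_real (- t - 1)) (complex_of_real (- 1 / t - 1))
               (complex_of_real (1 / (- (t powr (1/2)) - t powr (-1/2))))
         = complex_of_real (tutte V EE (\<lambda>e. vert ` e) (- t) (- 1 / t))"
proof -
  have r0: "- t - 1 \<noteq> (0::real)" using t by simp
  have q: "- 1 / t = - (1 / t)" by simp
  have "0 < 1 / t" using t by simp
  then have r1: "- 1 / t - 1 \<noteq> (0::real)" unfolding q by linarith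
  have xnz: "complex_of_real (- t - 1) \<noteq> 0" "complex_of_real (- 1 / t - 1) \<noteq> 0"
    using r0 r1 by (simp only: of_real_eq_0_iff not_False_eq_True)+
  have trm: "(let s = (real (neg_count pos F) - real (neg_count pos (EE - F))) / 2 in
           complex_of_real (- t - 1) powr complex_of_real (real (rg_r V vert EE) - real (rg_r V vert F) + s)
           * complex_of_real (- 1 / t - 1) powr complex_of_real (real (rg_n V vert F) - s)
           * complex_of_real (1 / (- (t powr (1/2)) - t powr (-1/2))) ^ nat (int (rg_k V vert F) - int (rg_bc V vert \<sigma> \<alpha> F) + int (rg_n V vert F)))
      = complex_of_real ((- t - 1) ^ (gr_rank V (\<lambda>e. vert ` e) EE - gr_rank V (\<lambda>e. vert ` e) F)
                          * (- 1 / t - 1) ^ gr_nullity V (\<lambda>e. vert ` e) F)" if F: "F \<in> Pow EE" for F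
  proof -
    have FE: "F \<subseteq> EE" using F by simp
    have e1: "{e \<in> F. \<not> pos e} = {}" "{e \<in> EE - F. \<not> pos e} = {}" using p FE by auto
    have n1: "neg_count pos F = 0" "neg_count pos (EE - F) = 0" unfolding neg_count_def e1 by simp_all
    have X: "int (rg_k V vert F) - int (rg_bc V vert \<sigma> \<alpha> F) + int (rg_n V vert F) = 0"
      using Xf_planar[OF g FE] unfolding Xf_def .
    have rle: "rg_r V vert F \<le> rg_r V vert EE"
      using k_anti[OF FE order_refl] k_le[of F] k_le[of EE] unfolding rg_r_def gr_rank_def rg_k_def by simp
    have r: "complex_of_real (real (rg_r V vert EE) - real (rg_r V vert F) + 0) = of_nat (rg_r V vert EE - rg_r V vert F)"
      using rle by (simp add: of_nat_diff)
    have n: "complex_of_real (real (rg_n V vert F) - 0) = of_nat (rg_n V vert F)" by simp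
    show ?thesis
      unfolding Let_def n1 X
      using r n powr_nat'[of "complex_of_real (- t - 1)"] powr_nat'[of "complex_of_real (- 1 / t - 1)"] xnz
      unfolding rg_r_def rg_n_def by simp
  qed
  show ?thesis
    unfolding signed_BR_def tutte_def Let_def[of EE] of_real_sum
    using trm by (intro sum.cong) auto
qed

end

theorem corollary4p2:
  fixes V :: "'v set" and D :: "'d set" and vert :: "'d \<Rightarrow> 'v"
    and \<sigma> \<alpha> :: "'d \<Rightarrow> 'd" and pos :: "'d set \<Rightarrow> bool"
    and ori :: "'d \<times> bool \<Rightarrow> bool" and t :: real
  assumes "ribbon_graph V D vert \<sigma> \<alpha>"
    and "medial_orientation D \<sigma> \<alpha> pos ori"
    and "t > 0"
  shows "complex_of_real (medial_jones V D vert \<sigma> \<alpha> pos ori t) =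
           complex_of_real ((-1) powi medial_writhe D \<alpha> pos ori
             * t powr ((3 * real_of_int (medial_writhe D \<alpha> pos ori)
                        - real (rg_r V vert (rg_edges D \<alpha>)) + real (rg_n V vert (rg_edges D \<alpha>))) / 4)
             * (- (t powr (1/2)) - t powr (-1/2)) powi (int (rg_k V vert (rg_edges D \<alpha>)) - 1))
           * signed_BR V D vert \<sigma> \<alpha> pos (complex_of_real (- t - 1)) (complex_of_real (- 1 / t - 1))
               (complex_of_real (1 / (- (t powr (1/2)) - t powr (-1/2))))
         \<and> (rg_genus V D vert \<sigma> \<alpha> = 0 \<and> (\<forall>e\<in>rg_edges D \<alpha>. pos e) \<longrightarrow>
         medial_jones V D vert \<sigma> \<alpha> pos ori t =
           (-1) powi medial_writhe D \<alpha> pos ori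
             * t powr ((3 * real_of_int (medial_writhe D \<alpha> pos ori)
                        - real (rg_r V vert (rg_edges D \<alpha>)) + real (rg_n V vert (rg_edges D \<alpha>))) / 4)
             * (- (t powr (1/2)) - t powr (-1/2)) powi (int (rg_k V vert (rg_edges D \<alpha>)) - 1)
             * tutte V (rg_edges D \<alpha>) (\<lambda>e. vert ` e) (- t) (- 1 / t))"
proof -
  interpret R: RG V D vert \<sigma> \<alpha> by (rule RG.intro) (rule assms(1))
  note M1 = R.main1[OF assms(3), of pos ori]
  show ?thesis
  proof
    show "complex_of_real (medial_jones V D vert \<sigma> \<alpha> pos ori t) =
           complex_of_real ((-1) powi medial_writhe D \<alpha> pos ori
             * t powr ((3 * real_of_int (medial_writhe D \<alpha> pos ori)
                        - real (rg_r V vert (rg_edges D \<alpha>)) + real (rg_n V vert (rg_edges D \<alpha>))) / 4)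
             * (- (t powr (1/2)) - t powr (-1/2)) powi (int (rg_k V vert (rg_edges D \<alpha>)) - 1))
           * signed_BR V D vert \<sigma> \<alpha> pos (complex_of_real (- t - 1)) (complex_of_real (- 1 / t - 1))
               (complex_of_real (1 / (- (t powr (1/2)) - t powr (-1/2))))" by (rule M1)
    show "rg_genus V D vert \<sigma> \<alpha> = 0 \<and> (\<forall>e\<in>rg_edges D \<alpha>. pos e) \<longrightarrow>
         medial_jones V D vert \<sigma> \<alpha> pos ori t =
           (-1) powi medial_writhe D \<alpha> pos ori
             * t powr ((3 * real_of_int (medial_writhe D \<alpha> pos ori)
                        - real (rg_r V vert (rg_edges D \<alpha>)) + real (rg_n V vert (rg_edges D \<alpha>))) / 4)
             * (- (t powr (1/2)) - t powr (-1/2)) powi (int (rg_k V vert (rg_edges D \<alpha>)) - 1)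
             * tutte V (rg_edges D \<alpha>) (\<lambda>e. vert ` e) (- t) (- 1 / t)"
    proof
      assume H: "rg_genus V D vert \<sigma> \<alpha> = 0 \<and> (\<forall>e\<in>rg_edges D \<alpha>. pos e)"
      have "signed_BR V D vert \<sigma> \<alpha> pos (complex_of_real (- t - 1)) (complex_of_real (- 1 / t - 1))
               (complex_of_real (1 / (- (t powr (1/2)) - t powr (-1/2))))
         = complex_of_real (tutte V (rg_edges D \<alpha>) (\<lambda>e. vert ` e) (- t) (- 1 / t))"
        using R.main2[OF assms(3)] H by blast
      then show "medial_jones V D vert \<sigma> \<alpha> pos ori t =
           (-1) powi medial_writhe D \<alpha> pos ori
             * t powr ((3 * real_of_int (medial_writhe D \<alpha> pos ori)
                        - real (rg_r V vert (rg_edges D \<alpha>)) + real (rg_n V vert (rg_edges D \<alpha>))) / 4)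
             * (- (t powr (1/2)) - t powr (-1/2)) powi (int (rg_k V vert (rg_edges D \<alpha>)) - 1)
             * tutte V (rg_edges D \<alpha>) (\<lambda>e. vert ` e) (- t) (- 1 / t)"
        using M1 by (simp only: of_real_mult[symmetric] of_real_eq_iff)
    qed
  qed
qed

end
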